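(* Let $G$ be a topological group and $A$ a topological $G$-module. Suppose that for every $p\ge0$ the augmented column complex $0\to A_c^p(G,A)\xrightarrow{\epsilon}A_{lc}^{p,0}(G,A)\xrightarrow{d_v}A_{lc}^{p,1}(G,A)\xrightarrow{d_v}\cdots$ is exact. Then the inclusion $j_v^*\colon C_c^*(G,A)\hookrightarrow\mathrm{Tot}\,A_{lc}^{*,*}(G,A)^G$ induces an isomorphism in cohomology, and for every $p$ the groups $H_{lc}^p(G,A)$, $H^p(\mathrm{Tot}\,A_{lc}^{*,*}(G,A)^G)$ and $H_c^p(G,A)$ are isomorphic.
   Context: A topological $G$-module is an abelian topological group $A$ with an action of $G$ by group automorphisms such that $G\times A\to A$ is continuous. For an identity neighbourhood $U$ of $G$ put $\Gamma_U^0:=G$ and, for $q\ge1$, $\Gamma_U^q:=\{(g_0,\dots,g_q)\in G^{q+1}\mid g_i^{-1}g_j\in U\ \forall i,j\}$. $G$ acts on maps $f\colon G^{n+1}\to A$ by $(g.f)(g_0,\dots,g_n)=g.f(g^{-1}g_0,\dots,g^{-1}g_n)$. With differential $df(g_0,\dots,g_{n+1})=\sum_i(-1)^if(g_0,\dots,\widehat{g_i},\dots,g_{n+1})$: $C_c^n(G,A)$ is the complex of continuous equivariant maps $G^{n+1}\to A$ (cohomology $H_c^n(G,A)$), and $C_{lc}^n(G,A)$ is the complex of equivariant maps whose restriction to $\Gamma_U^n$ is continuous for some identity neighbourhood $U$ (cohomology $H_{lc}^n(G,A)$). $A_c^p(G,A):=C(G^{p+1},A)$. $A_{lc}^{p,q}(G,A)$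 is the group of maps $f\colon G^{p+1}\times G^{q+1}\to A$ whose restriction to $G^{p+1}\times\Gamma_U^q$ is continuous for some identity neighbourhood $U$, with $d_hf(x_0,\dots,x_{p+1},\vec y)=\sum_{i}(-1)^if(x_0,\dots,\widehat{x_i},\dots,x_{p+1},\vec y)$ and $d_vf(\vec x,y_0,\dots,y_{q+1})=(-1)^p\sum_i(-1)^if(\vec x,y_0,\dots,\widehat{y_i},\dots,y_{q+1})$. $G$ acts diagonally, $(g.f)(\vec x,\vec y)=g.f(g^{-1}\vec x,g^{-1}\vec y)$; $A_{lc}^{p,q}(G,A)^G$ are the fixed points and $\mathrm{Tot}\,A_{lc}^{*,*}(G,A)^G$ the total complex ($\mathrm{Tot}^n=\bigoplus_{p+q=n}A_{lc}^{p,q}(G,A)^G$, differential $d_h+d_v$). The augmentation is $\epsilon(f)(\vec x,y_0)=f(\vec x)$, and $j_v^p\colon C_c^p(G,A)\to A_{lc}^{p,0}(G,A)^G\subset\mathrm{Tot}^p$ is $j_v(f)(\vec x,y_0)=f(\vec x)$. *)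

theory Defs
  imports "HOL-Analysis.Analysis" "HOL-Algebra.Coset"
begin

text \<open>The topological group G is a type 'g of class topological_group_add
(group_add is NOT assumed commutative; the group law is written additively, so
g^{-1} h is written - g + h and the identity is 0).
An (n+1)-tuple (g_0,...,g_n) in G^{n+1} is an extensional function nat => 'g on {..n}
(element of PiE {..n} (%_. UNIV)); G^{n+1} carries the product topology.
Cochains are functions on tuples which vanish outside G^{n+1} (so that they form an
abelian group under pointwise addition with equality being equality of functions).\<close>

definition gc_tuples :: "nat \<Rightarrow> (nat \<Rightarrow> 'g) set" where
  "gc_tuples n = PiE {..n} (\<lambda>_. UNIV)"

definition gc_tuple_top :: "nat \<Rightarrow> (nat \<Rightarrow> 'g::topological_space) topology" where
  "gc_tuple_top n = product_topology (\<lambda>_. euclidean) {..n}"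

definition gc_ltrans :: "'g::group_add \<Rightarrow> nat \<Rightarrow> (nat \<Rightarrow> 'g) \<Rightarrow> (nat \<Rightarrow> 'g)" where
  "gc_ltrans g n x = restrict (\<lambda>i. g + x i) {..n}"

text \<open>gc_face n i x: delete the i-th entry of the (n+2)-tuple x, giving an (n+1)-tuple\<close>
definition gc_face :: "nat \<Rightarrow> nat \<Rightarrow> (nat \<Rightarrow> 'g) \<Rightarrow> (nat \<Rightarrow> 'g)" where
  "gc_face n i x = restrict (\<lambda>k. if k < i then x k else x (Suc k)) {..n}"

definition gc_identity_nbhd :: "'g::topological_group_add set \<Rightarrow> bool" where
  "gc_identity_nbhd U \<longleftrightarrow> (\<exists>V. open V \<and> 0 \<in> V \<and> V \<subseteq> U)"

definition gc_Gamma :: "'g::group_add set \<Rightarrow> nat \<Rightarrow> (nat \<Rightarrow> 'g) set" where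
  "gc_Gamma U q = (if q = 0 then gc_tuples 0
     else {x \<in> gc_tuples q. \<forall>i\<le>q. \<forall>j\<le>q. - x i + x j \<in> U})"

definition topological_G_module ::
  "('g::topological_group_add \<Rightarrow> 'a::topological_ab_group_add \<Rightarrow> 'a) \<Rightarrow> bool" where
  "topological_G_module act \<longleftrightarrow>
     (\<forall>a. act 0 a = a) \<and> (\<forall>g h a. act (g + h) a = act g (act h a)) \<and>
     (\<forall>g a b. act g (a + b) = act g a + act g b) \<and>
     continuous_on UNIV (\<lambda>p. act (fst p) (snd p))"

definition gc_d :: "nat \<Rightarrow> ((nat \<Rightarrow> 'g) \<Rightarrow> 'a::ab_group_add) \<Rightarrow> (nat \<Rightarrow> 'g) \<Rightarrow> 'a" where
  "gc_d n f = (\<lambda>x. if x \<in> gc_tuples (Suc n)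
      then (\<Sum>i\<le>Suc n. if even i then f (gc_face n i x) else - f (gc_face n i x)) else 0)"

definition gc_equivariant ::
  "('g::group_add \<Rightarrow> 'a::ab_group_add \<Rightarrow> 'a) \<Rightarrow> nat \<Rightarrow> ((nat \<Rightarrow> 'g) \<Rightarrow> 'a) \<Rightarrow> bool" where
  "gc_equivariant act n f \<longleftrightarrow>
     (\<forall>g. \<forall>x\<in>gc_tuples n. act g (f (gc_ltrans (- g) n x)) = f x)"

definition Cc ::
  "('g::topological_group_add \<Rightarrow> 'a::topological_ab_group_add \<Rightarrow> 'a) \<Rightarrow> nat \<Rightarrow> ((nat \<Rightarrow> 'g) \<Rightarrow> 'a) set" where
  "Cc act n = {f. (\<forall>x. x \<notin> gc_tuples n \<longrightarrow> f x = 0) \<and>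
      continuous_map (gc_tuple_top n) euclidean f \<and> gc_equivariant act n f}"

definition Clc ::
  "('g::topological_group_add \<Rightarrow> 'a::topological_ab_group_add \<Rightarrow> 'a) \<Rightarrow> nat \<Rightarrow> ((nat \<Rightarrow> 'g) \<Rightarrow> 'a) set" where
  "Clc act n = {f. (\<forall>x. x \<notin> gc_tuples n \<longrightarrow> f x = 0) \<and>
      (\<exists>U. gc_identity_nbhd U \<and>
         continuous_map (subtopology (gc_tuple_top n) (gc_Gamma U n)) euclidean f) \<and>
      gc_equivariant act n f}"

definition cocycle_grp ::
  "(nat \<Rightarrow> 'c set) \<Rightarrow> (nat \<Rightarrow> 'c \<Rightarrow> 'c) \<Rightarrow> ('c \<Rightarrow> 'c \<Rightarrow> 'c) \<Rightarrow> 'c \<Rightarrow> nat \<Rightarrow> 'c monoid" where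
  "cocycle_grp C d add z n = \<lparr>carrier = {f \<in> C n. d n f = z}, mult = add, one = z\<rparr>"

definition coboundaries ::
  "(nat \<Rightarrow> 'c set) \<Rightarrow> (nat \<Rightarrow> 'c \<Rightarrow> 'c) \<Rightarrow> 'c \<Rightarrow> nat \<Rightarrow> 'c set" where
  "coboundaries C d z n = (if n = 0 then {z} else d (n - 1) ` C (n - 1))"

definition cohomology ::
  "(nat \<Rightarrow> 'c set) \<Rightarrow> (nat \<Rightarrow> 'c \<Rightarrow> 'c) \<Rightarrow> ('c \<Rightarrow> 'c \<Rightarrow> 'c) \<Rightarrow> 'c \<Rightarrow> nat \<Rightarrow> 'c set monoid" where
  "cohomology C d add z n = (cocycle_grp C d add z n) Mod (coboundaries C d z n)"

definition cohom_class ::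
  "(nat \<Rightarrow> 'c set) \<Rightarrow> (nat \<Rightarrow> 'c \<Rightarrow> 'c) \<Rightarrow> ('c \<Rightarrow> 'c \<Rightarrow> 'c) \<Rightarrow> 'c \<Rightarrow> nat \<Rightarrow> 'c \<Rightarrow> 'c set" where
  "cohom_class C d add z n f = (coboundaries C d z n) #>\<^bsub>cocycle_grp C d add z n\<^esub> f"

definition fun_add :: "('x \<Rightarrow> 'a::ab_group_add) \<Rightarrow> ('x \<Rightarrow> 'a) \<Rightarrow> 'x \<Rightarrow> 'a" where
  "fun_add f g = (\<lambda>x. f x + g x)"

definition Hc where "Hc act n = cohomology (Cc act) gc_d fun_add (\<lambda>_. 0) n"
definition Hlc where "Hlc act n = cohomology (Clc act) gc_d fun_add (\<lambda>_. 0) n"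

type_synonym ('g, 'a) bicochain = "(nat \<Rightarrow> 'g) \<Rightarrow> (nat \<Rightarrow> 'g) \<Rightarrow> 'a"

definition Ac ::
  "('g::topological_group_add \<Rightarrow> 'a::topological_ab_group_add \<Rightarrow> 'a) \<Rightarrow> nat \<Rightarrow> ((nat \<Rightarrow> 'g) \<Rightarrow> 'a) set" where
  "Ac act p = {f. (\<forall>x. x \<notin> gc_tuples p \<longrightarrow> f x = 0) \<and> continuous_map (gc_tuple_top p) euclidean f}"

definition Alc ::
  "('g::topological_group_add \<Rightarrow> 'a::topological_ab_group_add \<Rightarrow> 'a) \<Rightarrow> nat \<Rightarrow> nat \<Rightarrow> ('g, 'a) bicochain set" where
  "Alc act p q = {f. (\<forall>x y. \<not> (x \<in> gc_tuples p \<and> y \<in> gc_tuples q) \<longrightarrow> f x y = 0) \<and>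
      (\<exists>U. gc_identity_nbhd U \<and>
         continuous_map (subtopology (prod_topology (gc_tuple_top p) (gc_tuple_top q))
                                     (gc_tuples p \<times> gc_Gamma U q))
                        euclidean (\<lambda>(x, y). f x y))}"

definition Alc_G ::
  "('g::topological_group_add \<Rightarrow> 'a::topological_ab_group_add \<Rightarrow> 'a) \<Rightarrow> nat \<Rightarrow> nat \<Rightarrow> ('g, 'a) bicochain set" where
  "Alc_G act p q = {f \<in> Alc act p q. \<forall>g. \<forall>x\<in>gc_tuples p. \<forall>y\<in>gc_tuples q.
      act g (f (gc_ltrans (- g) p x) (gc_ltrans (- g) q y)) = f x y}"

definition d_h :: "nat \<Rightarrow> nat \<Rightarrow> ('g, 'a::ab_group_add) bicochain \<Rightarrow> ('g, 'a) bicochain" where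
  "d_h p q f = (\<lambda>x y. if x \<in> gc_tuples (Suc p) \<and> y \<in> gc_tuples q
      then (\<Sum>i\<le>Suc p. if even i then f (gc_face p i x) y else - f (gc_face p i x) y) else 0)"

definition d_v :: "nat \<Rightarrow> nat \<Rightarrow> ('g, 'a::ab_group_add) bicochain \<Rightarrow> ('g, 'a) bicochain" where
  "d_v p q f = (\<lambda>x y. if x \<in> gc_tuples p \<and> y \<in> gc_tuples (Suc q)
      then (let s = (\<Sum>i\<le>Suc q. if even i then f x (gc_face q i y) else - f x (gc_face q i y))
            in if even p then s else - s) else 0)"

definition aug :: "nat \<Rightarrow> ((nat \<Rightarrow> 'g) \<Rightarrow> 'a::ab_group_add) \<Rightarrow> ('g, 'a) bicochain" where
  "aug p f = (\<lambda>x y. if x \<in> gc_tuples p \<and> y \<in> gc_tuples 0 then f x else 0)"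

definition column_exact ::
  "('g::topological_group_add \<Rightarrow> 'a::topological_ab_group_add \<Rightarrow> 'a) \<Rightarrow> nat \<Rightarrow> bool" where
  "column_exact act p \<longleftrightarrow>
     inj_on (aug p) (Ac act p) \<and>
     aug p ` Ac act p \<subseteq> Alc act p 0 \<and>
     (\<forall>q. d_v p q ` Alc act p q \<subseteq> Alc act p (Suc q)) \<and>
     (\<forall>f\<in>Alc act p 0. d_v p 0 f = (\<lambda>_ _. 0) \<longleftrightarrow> (\<exists>h\<in>Ac act p. aug p h = f)) \<and>
     (\<forall>q. \<forall>f\<in>Alc act p (Suc q).
        d_v p (Suc q) f = (\<lambda>_ _. 0) \<longleftrightarrow> (\<exists>h\<in>Alc act p q. d_v p q h = f))"

definition Tot ::
  "('g::topological_group_add \<Rightarrow> 'a::topological_ab_group_add \<Rightarrow> 'a) \<Rightarrow> nat \<Rightarrow> (nat \<Rightarrow> ('g, 'a) bicochain) set" where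
  "Tot act n = {F. (\<forall>p\<le>n. F p \<in> Alc_G act p (n - p)) \<and> (\<forall>p>n. F p = (\<lambda>_ _. 0))}"

definition d_tot :: "nat \<Rightarrow> (nat \<Rightarrow> ('g, 'a::ab_group_add) bicochain) \<Rightarrow> (nat \<Rightarrow> ('g, 'a) bicochain)" where
  "d_tot n F = (\<lambda>p x y.
     (if 1 \<le> p \<and> p \<le> Suc n then d_h (p - 1) (Suc n - p) (F (p - 1)) x y else 0) +
     (if p \<le> n then d_v p (n - p) (F p) x y else 0))"

definition tot_add :: "(nat \<Rightarrow> ('g, 'a::ab_group_add) bicochain) \<Rightarrow> (nat \<Rightarrow> ('g, 'a) bicochain) \<Rightarrow> (nat \<Rightarrow> ('g, 'a) bicochain)" where
  "tot_add F H = (\<lambda>p x y. F p x y + H p x y)"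

definition HTot where "HTot act n = cohomology (Tot act) d_tot tot_add (\<lambda>_ _ _. 0) n"

definition j_v :: "nat \<Rightarrow> ((nat \<Rightarrow> 'g) \<Rightarrow> 'a::ab_group_add) \<Rightarrow> (nat \<Rightarrow> ('g, 'a) bicochain)" where
  "j_v n f = (\<lambda>p. if p = n then aug n f else (\<lambda>_ _. 0))"

end

theory Submission
  imports Defs "HOL-Library.Function_Algebras"
begin

definition cx :: "(nat \<Rightarrow> 'c::ab_group_add set) \<Rightarrow> (nat \<Rightarrow> 'c \<Rightarrow> 'c) \<Rightarrow> bool" where
 "cx C d \<longleftrightarrow> (\<forall>n. 0 \<in> C n \<and> (\<forall>x\<in>C n. \<forall>y\<in>C n. x + y \<in> C n) \<and> (\<forall>x\<in>C n. - x \<in> C n)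
    \<and> (\<forall>x\<in>C n. d n x \<in> C (Suc n)) \<and> (\<forall>x\<in>C n. \<forall>y\<in>C n. d n (x + y) = d n x + d n y)
    \<and> (\<forall>x\<in>C n. d (Suc n) (d n x) = 0))"

context
  fixes C :: "nat \<Rightarrow> 'c::ab_group_add set" and d
  assumes cx: "cx C d"
begin

lemma cx0: "0 \<in> C n" and cxadd: "x \<in> C n \<Longrightarrow> y \<in> C n \<Longrightarrow> x + y \<in> C n"
  and cxneg: "x \<in> C n \<Longrightarrow> - x \<in> C n" and cxd: "x \<in> C n \<Longrightarrow> d n x \<in> C (Suc n)"
  and cxdadd: "x \<in> C n \<Longrightarrow> y \<in> C n \<Longrightarrow> d n (x + y) = d n x + d n y"
  and cxdd: "x \<in> C n \<Longrightarrow> d (Suc n) (d n x) = 0"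
  using cx unfolding cx_def by blast+

lemma cxdiff: "x \<in> C n \<Longrightarrow> y \<in> C n \<Longrightarrow> x - y \<in> C n"
  using cxadd cxneg by (metis diff_conv_add_uminus)

lemma cxd0: "d n 0 = 0"
  using cxdadd[OF cx0 cx0, of n] by simp

lemma cxdneg: "x \<in> C n \<Longrightarrow> d n (- x) = - d n x"
  using cxdadd[OF _ cxneg, of x n x] cxd0 minus_unique[of "d n x" "d n (-x)"] by simp

lemma cxddiff: "x \<in> C n \<Longrightarrow> y \<in> C n \<Longrightarrow> d n (x - y) = d n x - d n y"
proof -
  assume a: "x \<in> C n" "y \<in> C n"
  have "d n (x + - y) = d n x + d n (- y)" by (rule cxdadd[OF a(1) cxneg[OF a(2)]])
  then show ?thesis using cxdneg[OF a(2)] by (simp only: diff_conv_add_uminus)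
qed

lemma cg_carrier: "carrier (cocycle_grp C d (+) 0 n) = {x \<in> C n. d n x = 0}"
  by (simp add: cocycle_grp_def)

lemma cg_comm: "comm_group (cocycle_grp C d (+) 0 n)"
  apply (rule comm_groupI)
  apply (auto simp: cocycle_grp_def cxadd cxdadd cx0 cxd0 add.assoc add.commute)
  apply (rule_tac x="-x" in exI)
  apply (auto simp: cxneg cxdneg)
  done

lemma cg_inv: "x \<in> carrier (cocycle_grp C d (+) 0 n) \<Longrightarrow> inv\<^bsub>cocycle_grp C d (+) 0 n\<^esub> x = - x"
  apply (rule group.inv_equality)
  using cg_comm comm_group.axioms(2) apply blast
  apply (auto simp: cocycle_grp_def cxneg cxdneg)
  done

lemma cob_sub: "coboundaries C d 0 n \<subseteq> {x \<in> C n. d n x = 0}"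
  by (cases n) (auto simp: coboundaries_def cx0 cxd0 cxd cxdd)

lemma cob_add: "x \<in> coboundaries C d 0 n \<Longrightarrow> y \<in> coboundaries C d 0 n \<Longrightarrow> x + y \<in> coboundaries C d 0 n"
  apply (cases n)
   apply (auto simp: coboundaries_def)
  apply (metis cxadd cxdadd image_eqI diff_Suc_1)
  done

lemma cob_neg: "x \<in> coboundaries C d 0 n \<Longrightarrow> - x \<in> coboundaries C d 0 n"
  apply (cases n)
   apply (auto simp: coboundaries_def)
  apply (metis cxneg cxdneg image_eqI)
  done

lemma cob_0: "0 \<in> coboundaries C d 0 n"
  apply (cases n)
   apply (auto simp: coboundaries_def)
  apply (metis cx0 cxd0 image_eqI)
  done

lemma cob_diff: "x \<in> coboundaries C d 0 n \<Longrightarrow> y \<in> coboundaries C d 0 n \<Longrightarrow> x - y \<in> coboundaries C d 0 n"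
  by (metis cob_add cob_neg diff_conv_add_uminus)

lemma cob_subgroup: "subgroup (coboundaries C d 0 n) (cocycle_grp C d (+) 0 n)"
proof (rule group.subgroupI)
  show "group (cocycle_grp C d (+) 0 n)" using cg_comm comm_group.axioms(2) by blast
  show "coboundaries C d 0 n \<subseteq> carrier (cocycle_grp C d (+) 0 n)" using cob_sub cg_carrier by blast
  show "coboundaries C d 0 n \<noteq> {}" using cob_0 by blast
  fix a assume a: "a \<in> coboundaries C d 0 n"
  have "a \<in> carrier (cocycle_grp C d (+) 0 n)" using a cob_sub cg_carrier by blast
  then show "inv\<^bsub>cocycle_grp C d (+) 0 n\<^esub> a \<in> coboundaries C d 0 n" using cg_inv cob_neg[OF a] by simp
next
  fix a b assume "a \<in> coboundaries C d 0 n" "b \<in> coboundaries C d 0 n"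
  then show "a \<otimes>\<^bsub>cocycle_grp C d (+) 0 n\<^esub> b \<in> coboundaries C d 0 n"
    using cob_add by (simp add: cocycle_grp_def)
qed

lemma cob_normal: "normal (coboundaries C d 0 n) (cocycle_grp C d (+) 0 n)"
  using comm_group.subgroup_imp_normal[OF cg_comm cob_subgroup] .

lemma cls_eq: "cohom_class C d (+) 0 n x = {b + x | b. b \<in> coboundaries C d 0 n}"
  by (auto simp: cohom_class_def r_coset_def cocycle_grp_def)

lemma cls_eq_iff:
  assumes "x \<in> C n" "y \<in> C n"
  shows "cohom_class C d (+) 0 n x = cohom_class C d (+) 0 n y \<longleftrightarrow> x - y \<in> coboundaries C d 0 n"
proof
  assume "cohom_class C d (+) 0 n x = cohom_class C d (+) 0 n y"
  then have "0 + x \<in> {b + y | b. b \<in> coboundaries C d 0 n}" using cls_eq cob_0 by blast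
  then obtain b where "b \<in> coboundaries C d 0 n" "x = b + y" by auto
  then show "x - y \<in> coboundaries C d 0 n" by simp
next
  assume h: "x - y \<in> coboundaries C d 0 n"
  have "{b + x | b. b \<in> coboundaries C d 0 n} = {b + y | b. b \<in> coboundaries C d 0 n}"
  proof safe
    fix b assume "b \<in> coboundaries C d 0 n"
    then show "\<exists>c. b + x = c + y \<and> c \<in> coboundaries C d 0 n"
      using cob_add[OF _ h] by (intro exI[of _ "b + (x - y)"]) (simp add: algebra_simps)
  next
    fix b assume "b \<in> coboundaries C d 0 n"
    then show "\<exists>c. b + y = c + x \<and> c \<in> coboundaries C d 0 n"
      using cob_diff[OF _ h] by (intro exI[of _ "b - (x - y)"]) (simp add: algebra_simps)
  qed
  then show "cohom_class C d (+) 0 n x = cohom_class C d (+) 0 n y" using cls_eq by simp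
qed

lemma cohom_carrier: "carrier (cohomology C d (+) 0 n) =
   (\<lambda>x. cohom_class C d (+) 0 n x) ` {x \<in> C n. d n x = 0}"
  by (simp add: cohomology_def carrier_FactGroup cohom_class_def cg_carrier)

lemma cohom_mult: "x \<in> C n \<Longrightarrow> d n x = 0 \<Longrightarrow> y \<in> C n \<Longrightarrow> d n y = 0 \<Longrightarrow>
  cohom_class C d (+) 0 n x \<otimes>\<^bsub>cohomology C d (+) 0 n\<^esub> cohom_class C d (+) 0 n y
  = cohom_class C d (+) 0 n (x + y)"
proof -
  assume a: "x \<in> C n" "d n x = 0" "y \<in> C n" "d n y = 0"
  have e: "x \<otimes>\<^bsub>cocycle_grp C d (+) 0 n\<^esub> y = x + y" by (simp add: cocycle_grp_def)
  have cx': "x \<in> carrier (cocycle_grp C d (+) 0 n)" "y \<in> carrier (cocycle_grp C d (+) 0 n)"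
    using a by (simp_all add: cg_carrier)
  have r: "(coboundaries C d 0 n #>\<^bsub>cocycle_grp C d (+) 0 n\<^esub> x) <#>\<^bsub>cocycle_grp C d (+) 0 n\<^esub>
     (coboundaries C d 0 n #>\<^bsub>cocycle_grp C d (+) 0 n\<^esub> y) =
     coboundaries C d 0 n #>\<^bsub>cocycle_grp C d (+) 0 n\<^esub> (x \<otimes>\<^bsub>cocycle_grp C d (+) 0 n\<^esub> y)"
    by (rule normal.rcos_sum[OF cob_normal cx'])
  show ?thesis
    unfolding cohomology_def cohom_class_def mult_FactGroup
    by (simp only: r e)
qed

lemma cohom_group: "group (cohomology C d (+) 0 n)"
  unfolding cohomology_def by (rule normal.factorgroup_is_group[OF cob_normal])

end

lemma chain_iso:
  fixes C :: "nat \<Rightarrow> 'c::ab_group_add set" and C' :: "nat \<Rightarrow> 'e::ab_group_add set"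
  assumes cx: "cx C d" and cx': "cx C' d'"
    and phiC: "\<And>x. x \<in> C n \<Longrightarrow> \<phi> x \<in> C' n"
    and phiadd: "\<And>x y. x \<in> C n \<Longrightarrow> y \<in> C n \<Longrightarrow> \<phi> (x + y) = \<phi> x + \<phi> y"
    and phicob: "\<And>x. x \<in> coboundaries C d 0 n \<Longrightarrow> \<phi> x \<in> coboundaries C' d' 0 n"
    and phicoc: "\<And>x. x \<in> C n \<Longrightarrow> d n x = 0 \<Longrightarrow> d' n (\<phi> x) = 0"
    and surj: "\<And>F. F \<in> C' n \<Longrightarrow> d' n F = 0 \<Longrightarrow> \<exists>x\<in>C n. d n x = 0 \<and> F - \<phi> x \<in> coboundaries C' d' 0 n"
    and inj: "\<And>x. x \<in> C n \<Longrightarrow> d n x = 0 \<Longrightarrow> \<phi> x \<in> coboundaries C' d' 0 n \<Longrightarrow> x \<in> coboundaries C d 0 n"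
  shows "\<exists>\<psi>. \<psi> \<in> iso (cohomology C d (+) 0 n) (cohomology C' d' (+) 0 n) \<and>
     (\<forall>x \<in> carrier (cocycle_grp C d (+) 0 n). \<psi> (cohom_class C d (+) 0 n x) = cohom_class C' d' (+) 0 n (\<phi> x))"
proof -
  define cl where "cl = cohom_class C d (+) 0 n"
  define cl' where "cl' = cohom_class C' d' (+) 0 n"
  define \<psi> where "\<psi> S = (\<Union>x\<in>S. cl' (\<phi> x))" for S
  have phi0: "\<phi> 0 = 0" using phiadd[OF cx0[OF cx] cx0[OF cx]] by simp
  have phidiff: "\<phi> (x - y) = \<phi> x - \<phi> y" if "x \<in> C n" "y \<in> C n" for x y
    using phiadd[OF cxdiff[OF cx that] that(2)] by (simp add: algebra_simps)
  have key: "\<psi> (cl x) = cl' (\<phi> x)" if x: "x \<in> C n" "d n x = 0" for x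
  proof -
    have clx: "cl x = {b + x |b. b \<in> coboundaries C d 0 n}" unfolding cl_def by (rule cls_eq[OF cx])
    have A: "cl' (\<phi> z) = cl' (\<phi> x)" if z: "z \<in> cl x" for z
    proof -
      obtain b where b: "b \<in> coboundaries C d 0 n" "z = b + x" using z unfolding clx by auto
      have bC: "b \<in> C n" using cob_sub[OF cx] b by blast
      have bx: "b + x \<in> C n" using cxadd[OF cx bC x(1)] .
      have e: "\<phi> (b + x) - \<phi> x = \<phi> b" using phiadd[OF bC x(1)] by simp
      have "cl' (\<phi> (b + x)) = cl' (\<phi> x) \<longleftrightarrow> \<phi> (b + x) - \<phi> x \<in> coboundaries C' d' 0 n"
        unfolding cl'_def by (rule cls_eq_iff[OF cx' phiC[OF bx] phiC[OF x(1)]])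
      then show ?thesis using e phicob[OF b(1)] b(2) by simp
    qed
    have B: "x \<in> cl x" unfolding clx using cob_0[OF cx, of n] by force
    have "\<psi> (cl x) = (\<Union>z\<in>cl x. cl' (\<phi> x))" unfolding \<psi>_def using A by (intro SUP_cong) simp_all
    also have "\<dots> = cl' (\<phi> x)" using B by auto
    finally show ?thesis .
  qed
  have carr: "S \<in> carrier (cohomology C d (+) 0 n) \<longleftrightarrow> (\<exists>x. x \<in> C n \<and> d n x = 0 \<and> S = cl x)" for S
  proof -
    have "carrier (cohomology C d (+) 0 n) = cl ` {x \<in> C n. d n x = 0}" unfolding cl_def by (rule cohom_carrier[OF cx])
    then show ?thesis by blast
  qed
  have carr': "S \<in> carrier (cohomology C' d' (+) 0 n) \<longleftrightarrow> (\<exists>x. x \<in> C' n \<and> d' n x = 0 \<and> S = cl' x)" for S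
  proof -
    have "carrier (cohomology C' d' (+) 0 n) = cl' ` {x \<in> C' n. d' n x = 0}" unfolding cl'_def by (rule cohom_carrier[OF cx'])
    then show ?thesis by blast
  qed
  have mult: "cl x \<otimes>\<^bsub>cohomology C d (+) 0 n\<^esub> cl y = cl (x + y)"
    if "x \<in> C n" "d n x = 0" "y \<in> C n" "d n y = 0" for x y
    unfolding cl_def by (rule cohom_mult[OF cx that])
  have mult': "cl' x \<otimes>\<^bsub>cohomology C' d' (+) 0 n\<^esub> cl' y = cl' (x + y)"
    if "x \<in> C' n" "d' n x = 0" "y \<in> C' n" "d' n y = 0" for x y
    unfolding cl'_def by (rule cohom_mult[OF cx' that])
  have img: "\<psi> S \<in> carrier (cohomology C' d' (+) 0 n)" if S: "S \<in> carrier (cohomology C d (+) 0 n)" for S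
  proof -
    obtain x where x: "x \<in> C n" "d n x = 0" "S = cl x" using carr[THEN iffD1, OF S] by blast
    have "\<psi> S = cl' (\<phi> x)" using key[OF x(1,2)] x(3) by simp
    then show ?thesis using carr'[THEN iffD2] phiC[OF x(1)] phicoc[OF x(1,2)] by blast
  qed
  have hom: "\<psi> \<in> hom (cohomology C d (+) 0 n) (cohomology C' d' (+) 0 n)"
  proof (rule homI)
    fix S assume "S \<in> carrier (cohomology C d (+) 0 n)"
    then show "\<psi> S \<in> carrier (cohomology C' d' (+) 0 n)" by (rule img)
  next
    fix S T assume S: "S \<in> carrier (cohomology C d (+) 0 n)" and T: "T \<in> carrier (cohomology C d (+) 0 n)"
    obtain x where x: "x \<in> C n" "d n x = 0" "S = cl x" using carr[THEN iffD1, OF S] by blast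
    obtain y where y: "y \<in> C n" "d n y = 0" "T = cl y" using carr[THEN iffD1, OF T] by blast
    have xy: "x + y \<in> C n" "d n (x + y) = 0" using x y cxadd[OF cx] cxdadd[OF cx] by auto
    have "\<psi> (S \<otimes>\<^bsub>cohomology C d (+) 0 n\<^esub> T) = \<psi> (cl (x + y))" using mult[OF x(1,2) y(1,2)] x(3) y(3) by simp
    also have "\<dots> = cl' (\<phi> x + \<phi> y)" using key[OF xy] phiadd[OF x(1) y(1)] by simp
    also have "\<dots> = cl' (\<phi> x) \<otimes>\<^bsub>cohomology C' d' (+) 0 n\<^esub> cl' (\<phi> y)"
      using mult'[OF phiC[OF x(1)] phicoc[OF x(1,2)] phiC[OF y(1)] phicoc[OF y(1,2)]] by simp
    also have "\<dots> = \<psi> S \<otimes>\<^bsub>cohomology C' d' (+) 0 n\<^esub> \<psi> T" using key[OF x(1,2)] key[OF y(1,2)] x(3) y(3) by simp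
    finally show "\<psi> (S \<otimes>\<^bsub>cohomology C d (+) 0 n\<^esub> T) = \<psi> S \<otimes>\<^bsub>cohomology C' d' (+) 0 n\<^esub> \<psi> T" .
  qed
  have bij: "bij_betw \<psi> (carrier (cohomology C d (+) 0 n)) (carrier (cohomology C' d' (+) 0 n))"
  proof (rule bij_betw_imageI)
    show "inj_on \<psi> (carrier (cohomology C d (+) 0 n))"
    proof (rule inj_onI)
      fix S T assume S: "S \<in> carrier (cohomology C d (+) 0 n)" and T: "T \<in> carrier (cohomology C d (+) 0 n)" and e0: "\<psi> S = \<psi> T"
      obtain x where x: "x \<in> C n" "d n x = 0" "S = cl x" using carr[THEN iffD1, OF S] by blast
      obtain y where y: "y \<in> C n" "d n y = 0" "T = cl y" using carr[THEN iffD1, OF T] by blast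
      have e: "cl' (\<phi> x) = cl' (\<phi> y)" using e0 key[OF x(1,2)] key[OF y(1,2)] x(3) y(3) by simp
      have "\<phi> x - \<phi> y \<in> coboundaries C' d' 0 n"
        using e cls_eq_iff[OF cx' phiC[OF x(1)] phiC[OF y(1)]] unfolding cl'_def by simp
      then have p: "\<phi> (x - y) \<in> coboundaries C' d' 0 n" using phidiff[OF x(1) y(1)] by simp
      have dd: "d n (x - y) = 0" using cxddiff[OF cx x(1) y(1)] x y by simp
      have "x - y \<in> coboundaries C d 0 n" by (rule inj[OF cxdiff[OF cx x(1) y(1)] dd p])
      then have "cl x = cl y" using cls_eq_iff[OF cx x(1) y(1)] unfolding cl_def by simp
      then show "S = T" using x(3) y(3) by simp
    qed
  next
    show "\<psi> ` carrier (cohomology C d (+) 0 n) = carrier (cohomology C' d' (+) 0 n)"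
    proof
      show "\<psi> ` carrier (cohomology C d (+) 0 n) \<subseteq> carrier (cohomology C' d' (+) 0 n)" using img by blast
    next
      show "carrier (cohomology C' d' (+) 0 n) \<subseteq> \<psi> ` carrier (cohomology C d (+) 0 n)"
      proof
        fix S assume S: "S \<in> carrier (cohomology C' d' (+) 0 n)"
        obtain F where F: "F \<in> C' n" "d' n F = 0" "S = cl' F" using carr'[THEN iffD1, OF S] by blast
        obtain x where x: "x \<in> C n" "d n x = 0" "F - \<phi> x \<in> coboundaries C' d' 0 n" using surj F by blast
        have "cl' F = cl' (\<phi> x)" using cls_eq_iff[OF cx' F(1) phiC[OF x(1)]] x(3) unfolding cl'_def by simp
        then have "S = \<psi> (cl x)" using key[OF x(1,2)] F(3) by simp
        moreover have "cl x \<in> carrier (cohomology C d (+) 0 n)" using x carr[THEN iffD2] by blast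
        ultimately show "S \<in> \<psi> ` carrier (cohomology C d (+) 0 n)" by blast
      qed
    qed
  qed
  have "\<psi> \<in> iso (cohomology C d (+) 0 n) (cohomology C' d' (+) 0 n)" using hom bij by (simp add: iso_def)
  moreover have "\<forall>x \<in> carrier (cocycle_grp C d (+) 0 n). \<psi> (cohom_class C d (+) 0 n x) = cohom_class C' d' (+) 0 n (\<phi> x)"
    using key unfolding cg_carrier[OF cx] cl_def cl'_def by blast
  ultimately show ?thesis by blast
qed


definition TT :: "(nat \<Rightarrow> nat \<Rightarrow> 'c::ab_group_add set) \<Rightarrow> nat \<Rightarrow> (nat \<Rightarrow> 'c) set" where
  "TT K n = {F. (\<forall>p\<le>n. F p \<in> K p (n - p)) \<and> (\<forall>p>n. F p = 0)}"

definition DD :: "(nat \<Rightarrow> nat \<Rightarrow> 'c \<Rightarrow> 'c) \<Rightarrow> (nat \<Rightarrow> nat \<Rightarrow> 'c \<Rightarrow> 'c) \<Rightarrow> nat \<Rightarrow> (nat \<Rightarrow> 'c::ab_group_add) \<Rightarrow> nat \<Rightarrow> 'c" where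
  "DD a b n F = (\<lambda>p. (if 1 \<le> p \<and> p \<le> Suc n then b (p - 1) (Suc n - p) (F (p - 1)) else 0) +
     (if p \<le> n then a p (n - p) (F p) else 0))"

definition jj :: "(nat \<Rightarrow> 'e \<Rightarrow> 'c::ab_group_add) \<Rightarrow> nat \<Rightarrow> 'e \<Rightarrow> nat \<Rightarrow> 'c" where
  "jj e n x = (\<lambda>p. if p = n then e n x else 0)"

definition single :: "nat \<Rightarrow> 'c \<Rightarrow> nat \<Rightarrow> 'c::zero" where
  "single k h = (\<lambda>p. if p = k then h else 0)"

locale dcx =
  fixes K :: "nat \<Rightarrow> nat \<Rightarrow> 'c::ab_group_add set" and a b :: "nat \<Rightarrow> nat \<Rightarrow> 'c \<Rightarrow> 'c"
  assumes K0: "\<And>p q. 0 \<in> K p q"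
    and Kadd: "\<And>p q x y. x \<in> K p q \<Longrightarrow> y \<in> K p q \<Longrightarrow> x + y \<in> K p q"
    and Kneg: "\<And>p q x. x \<in> K p q \<Longrightarrow> - x \<in> K p q"
    and aK: "\<And>p q x. x \<in> K p q \<Longrightarrow> a p q x \<in> K p (Suc q)"
    and bK: "\<And>p q x. x \<in> K p q \<Longrightarrow> b p q x \<in> K (Suc p) q"
    and aadd: "\<And>p q x y. a p q (x + y) = a p q x + a p q y"
    and badd: "\<And>p q x y. b p q (x + y) = b p q x + b p q y"
    and aa: "\<And>p q x. x \<in> K p q \<Longrightarrow> a p (Suc q) (a p q x) = 0"
    and bb: "\<And>p q x. x \<in> K p q \<Longrightarrow> b (Suc p) q (b p q x) = 0"
    and ab: "\<And>p q x. x \<in> K p q \<Longrightarrow> a (Suc p) q (b p q x) + b p (Suc q) (a p q x) = 0"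
begin

lemma a0[simp]: "a p q 0 = 0" using aadd[of p q 0 0] by simp
lemma b0[simp]: "b p q 0 = 0" using badd[of p q 0 0] by simp
lemma aneg: "a p q (- x) = - a p q x" using aadd[of p q x "-x"] by (simp add: eq_neg_iff_add_eq_0 add.commute)
lemma bneg: "b p q (- x) = - b p q x" using badd[of p q x "-x"] by (simp add: eq_neg_iff_add_eq_0 add.commute)
lemma adiff: "a p q (x - y) = a p q x - a p q y" using aadd[of p q x "-y"] aneg[of p q y] by (simp only: diff_conv_add_uminus)
lemma bdiff: "b p q (x - y) = b p q x - b p q y" using badd[of p q x "-y"] bneg[of p q y] by (simp only: diff_conv_add_uminus)

lemma Kdiff: "x \<in> K p q \<Longrightarrow> y \<in> K p q \<Longrightarrow> x - y \<in> K p q"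
  using Kadd Kneg by (metis diff_conv_add_uminus)

lemma TT_iff: "F \<in> TT K n \<longleftrightarrow> (\<forall>p\<le>n. F p \<in> K p (n - p)) \<and> (\<forall>p>n. F p = 0)"
  by (simp add: TT_def)

lemma DD_add: "DD a b n (F + G) = DD a b n F + DD a b n G"
  by (rule ext) (simp add: DD_def aadd badd algebra_simps)

lemma DD_diff: "DD a b n (F - G) = DD a b n F - DD a b n G"
  by (rule ext) (simp add: DD_def adiff bdiff algebra_simps)

lemma DD_T: assumes F: "F \<in> TT K n" shows "DD a b n F \<in> TT K (Suc n)"
  unfolding TT_iff
proof (intro conjI allI impI)
  fix p assume p: "p \<le> Suc n"
  have t1: "(if 1 \<le> p \<and> p \<le> Suc n then b (p - 1) (Suc n - p) (F (p - 1)) else 0) \<in> K p (Suc n - p)"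
  proof (cases "1 \<le> p")
    case True
    then obtain r where r: "p = Suc r" by (cases p) auto
    have "F r \<in> K r (Suc n - p)" using F p r unfolding TT_iff by auto
    then show ?thesis using bK r p by auto
  qed (auto simp: K0)
  have t2: "(if p \<le> n then a p (n - p) (F p) else 0) \<in> K p (Suc n - p)"
  proof (cases "p \<le> n")
    case True
    have "F p \<in> K p (n - p)" using F True unfolding TT_iff by auto
    then show ?thesis using aK True by (simp add: Suc_diff_le)
  qed (auto simp: K0)
  show "DD a b n F p \<in> K p (Suc n - p)" unfolding DD_def using Kadd[OF t1 t2] by simp
next
  fix p assume p: "Suc n < p"
  then show "DD a b n F p = 0" unfolding DD_def using F unfolding TT_iff by auto
qed

lemma DD_DD: assumes F: "F \<in> TT K n" shows "DD a b (Suc n) (DD a b n F) = 0"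
proof (rule ext)
  fix p
  have Fi: "\<And>p. p \<le> n \<Longrightarrow> F p \<in> K p (n - p)" and Fo: "\<And>p. n < p \<Longrightarrow> F p = 0" using F unfolding TT_iff by auto
  show "DD a b (Suc n) (DD a b n F) p = 0 p"
  proof (cases p)
    case 0
    then show ?thesis using aa[OF Fi[of 0]] by (simp add: DD_def)
  next
    case (Suc r)
    show ?thesis
    proof (cases "r \<le> n")
      case True
      have A: "b r (Suc n - r) (if 1 \<le> r \<and> r \<le> Suc n then b (r - 1) (Suc n - r) (F (r - 1)) else 0) = 0"
      proof (cases r)
        case (Suc r')
        have "F r' \<in> K r' (Suc n - r)" using Fi[of r'] True Suc by auto
        then show ?thesis using bb Suc True by auto
      qed simp
      have B: "a (Suc r) (n - r) (if Suc r \<le> n then a (Suc r) (n - Suc r) (F (Suc r)) else 0) = 0"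
      proof (cases "Suc r \<le> n")
        case True
        then have "n - r = Suc (n - Suc r)" by simp
        then show ?thesis using aa[OF Fi[OF True]] True by simp
      qed simp
      have C: "b r (Suc n - r) (a r (n - r) (F r)) + a (Suc r) (n - r) (b r (n - r) (F r)) = 0"
        using ab[OF Fi[OF True]] True by (simp add: Suc_diff_le add.commute)
      have "DD a b (Suc n) (DD a b n F) p =
         b r (Suc n - r) (if 1 \<le> r \<and> r \<le> Suc n then b (r - 1) (Suc n - r) (F (r - 1)) else 0)
         + b r (Suc n - r) (a r (n - r) (F r))
         + (a (Suc r) (n - r) (b r (n - r) (F r))
         + a (Suc r) (n - r) (if Suc r \<le> n then a (Suc r) (n - Suc r) (F (Suc r)) else 0))"
        using True Suc by (simp add: DD_def aadd badd Suc_diff_le)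
      also have "\<dots> = 0" using A B C by (simp add: algebra_simps)
      finally show ?thesis by simp
    next
      case False
      show ?thesis
      proof (cases "r = Suc n")
        case True
        then show ?thesis using Suc bb[OF Fi[of n]] Fo[of "Suc n"] by (simp add: DD_def)
      next
        case False
        then show ?thesis using Suc \<open>\<not> r \<le> n\<close> by (simp add: DD_def)
      qed
    qed
  qed
qed

lemma cxT: "cx (TT K) (DD a b)"
  unfolding cx_def
proof (intro allI conjI ballI)
  fix n
  show "0 \<in> TT K n" by (simp add: TT_iff K0)
  show "x + y \<in> TT K n" if "x \<in> TT K n" "y \<in> TT K n" for x y using that by (auto simp: TT_iff Kadd)
  show "- x \<in> TT K n" if "x \<in> TT K n" for x using that by (auto simp: TT_iff Kneg)
  show "DD a b n x \<in> TT K (Suc n)" if "x \<in> TT K n" for x using DD_T that .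
  show "DD a b n (x + y) = DD a b n x + DD a b n y" for x y by (rule DD_add)
  show "DD a b (Suc n) (DD a b n x) = 0" if "x \<in> TT K n" for x using DD_DD that .
qed

end

locale aug_dcx = dcx K a b for K :: "nat \<Rightarrow> nat \<Rightarrow> 'c::ab_group_add set" and a b +
  fixes E :: "nat \<Rightarrow> 'e::ab_group_add set" and dE :: "nat \<Rightarrow> 'e \<Rightarrow> 'e" and e :: "nat \<Rightarrow> 'e \<Rightarrow> 'c"
  assumes cxE: "cx E dE"
    and eK: "\<And>p x. x \<in> E p \<Longrightarrow> e p x \<in> K p 0"
    and eadd: "\<And>p x y. x \<in> E p \<Longrightarrow> y \<in> E p \<Longrightarrow> e p (x + y) = e p x + e p y"
    and einj: "\<And>p x. x \<in> E p \<Longrightarrow> e p x = 0 \<Longrightarrow> x = 0"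
    and ea: "\<And>p x. x \<in> E p \<Longrightarrow> a p 0 (e p x) = 0"
    and eb: "\<And>p x. x \<in> E p \<Longrightarrow> b p 0 (e p x) = e (Suc p) (dE p x)"
    and ex0: "\<And>p F. F \<in> K p 0 \<Longrightarrow> a p 0 F = 0 \<Longrightarrow> \<exists>x\<in>E p. F = e p x"
    and exS: "\<And>p q F. F \<in> K p (Suc q) \<Longrightarrow> a p (Suc q) F = 0 \<Longrightarrow> \<exists>h\<in>K p q. F = a p q h"
begin

lemma e_zero: "e p 0 = 0"
proof -
  have "0 \<in> E p" using cx0[OF cxE] .
  then show ?thesis using eadd[of 0 p 0] by simp
qed

lemma eneg: "x \<in> E p \<Longrightarrow> e p (- x) = - e p x"
  using eadd[of x p "-x"] cxneg[OF cxE, of x p] e_zero[of p] minus_unique[of "e p x" "e p (-x)"] by simp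

lemma ediff: "u \<in> E p \<Longrightarrow> x \<in> E p \<Longrightarrow> e p (u - x) = e p u - e p x"
  using eadd[of u p "-x"] cxneg[OF cxE, of x p] eneg[of x p] by (simp only: diff_conv_add_uminus)

lemma single_T: "k \<le> m \<Longrightarrow> h \<in> K k (m - k) \<Longrightarrow> single k h \<in> TT K m"
  by (auto simp: TT_iff single_def K0)

lemma DD_single_lt: "p < k \<Longrightarrow> DD a b m (single k h) p = 0"
  by (auto simp: DD_def single_def)

lemma DD_single_eq: "k \<le> m \<Longrightarrow> DD a b m (single k h) k = a k (m - k) h"
  by (auto simp: DD_def single_def)

lemma stair:
  assumes F: "F \<in> TT K (Suc m)" and DF: "\<forall>p\<le>m. DD a b (Suc m) F p = 0"
  shows "\<exists>H \<in> TT K m. \<forall>p\<le>m. (F - DD a b m H) p = 0"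
proof -
  have "k \<le> Suc m \<Longrightarrow> \<exists>H \<in> TT K m. \<forall>p<k. (F - DD a b m H) p = 0" for k
  proof (induction k)
    case 0
    show ?case using cx0[OF cxT] by blast
  next
    case (Suc k)
    then obtain H where H: "H \<in> TT K m" "\<forall>p<k. (F - DD a b m H) p = 0" by auto
    define F' where "F' = F - DD a b m H"
    have F'T: "F' \<in> TT K (Suc m)" unfolding F'_def using cxdiff[OF cxT F cxd[OF cxT H(1)]] .
    have DF': "DD a b (Suc m) F' = DD a b (Suc m) F" unfolding F'_def DD_diff using cxdd[OF cxT H(1)] by simp
    have F'lt: "\<And>p. p < k \<Longrightarrow> F' p = 0" using H(2) F'_def by simp
    have km: "k \<le> m" using Suc.prems by simp
    have "F' k \<in> K k (Suc m - k)" using F'T km unfolding TT_iff by simp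
    then have F'k: "F' k \<in> K k (Suc (m - k))" using Suc_diff_le[OF km] by simp
    have "DD a b (Suc m) F' k = a k (Suc m - k) (F' k)"
    proof (cases k)
      case (Suc k') then show ?thesis using F'lt[of k'] km by (simp add: DD_def)
    qed (simp add: DD_def)
    then have "a k (Suc (m - k)) (F' k) = 0" using DF' DF km by (simp add: Suc_diff_le)
    then obtain h where h: "h \<in> K k (m - k)" "F' k = a k (m - k) h" using exS[OF F'k] by blast
    define H' where "H' = H + single k h"
    have H'T: "H' \<in> TT K m" unfolding H'_def using cxadd[OF cxT H(1) single_T[OF km h(1)]] .
    have "\<forall>p<Suc k. (F - DD a b m H') p = 0"
    proof (intro allI impI)
      fix p assume p: "p < Suc k"
      have "(F - DD a b m H') p = F' p - DD a b m (single k h) p"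
        unfolding H'_def F'_def DD_add by simp
      then show "(F - DD a b m H') p = 0"
        using p F'lt[of p] DD_single_lt[of p k m h] DD_single_eq[OF km, of h] h(2)
        by (cases "p = k") auto
    qed
    then show ?case using H'T by blast
  qed
  from this[of "Suc m"] show ?thesis by (auto simp: less_Suc_eq_le)
qed

lemma jj_T: "x \<in> E n \<Longrightarrow> jj e n x \<in> TT K n"
  by (auto simp: TT_iff jj_def eK K0)

lemma jj_add: "x \<in> E n \<Longrightarrow> y \<in> E n \<Longrightarrow> jj e n (x + y) = jj e n x + jj e n y"
  by (rule ext) (auto simp: jj_def eadd)

lemma jj_chain: "x \<in> E n \<Longrightarrow> DD a b n (jj e n x) = jj e (Suc n) (dE n x)"
  by (rule ext) (auto simp: DD_def jj_def ea eb)

lemma jj_zero: "jj e n 0 = 0"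
  by (rule ext) (simp add: jj_def e_zero)

lemma jj_cocycle: "x \<in> E n \<Longrightarrow> dE n x = 0 \<Longrightarrow> DD a b n (jj e n x) = 0"
  using jj_chain[of x n] jj_zero[of "Suc n"] by simp

lemma surj_j:
  assumes F: "F \<in> TT K n" and DF: "DD a b n F = 0"
  shows "\<exists>x\<in>E n. dE n x = 0 \<and> F - jj e n x \<in> coboundaries (TT K) (DD a b) 0 n"
proof -
  obtain F' where F'T: "F' \<in> TT K n" and F'lt: "\<forall>p<n. F' p = 0" and DF': "DD a b n F' = 0"
    and cob: "F - F' \<in> coboundaries (TT K) (DD a b) 0 n"
  proof (cases n)
    case 0
    then show ?thesis using that[of F] F DF cob_0[OF cxT] by simp
  next
    case (Suc m)
    have "\<forall>p\<le>m. DD a b (Suc m) F p = 0" using DF Suc by simp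
    then obtain H where H: "H \<in> TT K m" "\<forall>p\<le>m. (F - DD a b m H) p = 0" using stair F Suc by blast
    have "DD a b n (F - DD a b m H) = 0" using DF Suc DD_diff cxdd[OF cxT H(1)] by simp
    moreover have "F - DD a b m H \<in> TT K n" using cxdiff[OF cxT F, of "DD a b m H"] cxd[OF cxT H(1)] Suc by simp
    moreover have "F - (F - DD a b m H) \<in> coboundaries (TT K) (DD a b) 0 n"
      using H(1) Suc by (simp add: coboundaries_def)
    moreover have "\<forall>p<n. (F - DD a b m H) p = 0" using H(2) Suc by (simp add: less_Suc_eq_le)
    ultimately show ?thesis using that by blast
  qed
  have Fn: "F' n \<in> K n 0" using F'T unfolding TT_iff by auto
  have "DD a b n F' n = a n 0 (F' n)"
  proof (cases n)
    case (Suc k) then show ?thesis using F'lt by (simp add: DD_def)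
  qed (simp add: DD_def)
  then have "a n 0 (F' n) = 0" using fun_cong[OF DF', of n] by simp
  then obtain x where x: "x \<in> E n" "F' n = e n x" using ex0[OF Fn] by blast
  have F'j: "F' = jj e n x"
  proof (rule ext)
    fix p show "F' p = jj e n x p"
      using F'lt x(2) F'T unfolding TT_iff jj_def by (cases "p < n"; cases "p = n") auto
  qed
  have "DD a b n (jj e n x) = 0" using DF' unfolding F'j .
  then have "jj e (Suc n) (dE n x) = 0" unfolding jj_chain[OF x(1)] .
  then have "e (Suc n) (dE n x) = 0" using fun_cong[of _ _ "Suc n"] unfolding jj_def by fastforce
  then have "dE n x = 0" using einj cxd[OF cxE x(1)] by blast
  then show ?thesis using x(1) cob F'j by blast
qed

lemma inj_j:
  assumes x: "x \<in> E n" and dx: "dE n x = 0" and cb: "jj e n x \<in> coboundaries (TT K) (DD a b) 0 n"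
  shows "x \<in> coboundaries E dE 0 n"
proof (cases n)
  case 0
  then have "jj e 0 x = 0" using cb by (simp add: coboundaries_def)
  then have "e 0 x = 0" using fun_cong[of _ _ 0] unfolding jj_def by fastforce
  then show ?thesis using einj x 0 by (simp add: coboundaries_def)
next
  case (Suc m)
  obtain G where G: "G \<in> TT K m" "DD a b m G = jj e (Suc m) x" using cb Suc by (auto simp: coboundaries_def)
  obtain G' where G'T: "G' \<in> TT K m" and G'D: "DD a b m G' = jj e (Suc m) x" and G'lt: "\<forall>p<m. G' p = 0"
  proof (cases m)
    case 0 then show ?thesis using that G by simp
  next
    case (Suc m')
    have "\<forall>p\<le>m'. DD a b (Suc m') G p = 0" using G(2) Suc by (simp add: jj_def)
    then obtain H where H: "H \<in> TT K m'" "\<forall>p\<le>m'. (G - DD a b m' H) p = 0" using stair G(1) Suc by blast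
    have "DD a b m (G - DD a b m' H) = jj e (Suc m) x" using G(2) Suc DD_diff cxdd[OF cxT H(1)] by simp
    moreover have "G - DD a b m' H \<in> TT K m" using cxdiff[OF cxT G(1), of "DD a b m' H"] cxd[OF cxT H(1)] Suc by simp
    moreover have "\<forall>p<m. (G - DD a b m' H) p = 0" using H(2) Suc by (simp add: less_Suc_eq_le)
    ultimately show ?thesis using that by blast
  qed
  have Gm: "G' m \<in> K m 0" using G'T unfolding TT_iff by auto
  have "DD a b m G' m = a m 0 (G' m)"
  proof (cases m)
    case (Suc k) then show ?thesis using G'lt by (simp add: DD_def)
  qed (simp add: DD_def)
  moreover have "DD a b m G' m = 0" using G'D by (simp add: jj_def)
  ultimately have "a m 0 (G' m) = 0" by simp
  then obtain y where y: "y \<in> E m" "G' m = e m y" using ex0[OF Gm] by blast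
  have "DD a b m G' (Suc m) = b m 0 (G' m)" using G'T unfolding TT_iff by (simp add: DD_def)
  moreover have "DD a b m G' (Suc m) = e (Suc m) x" using fun_cong[OF G'D, of "Suc m"] by (simp add: jj_def)
  moreover have "b m 0 (G' m) = e (Suc m) (dE m y)" using eb[OF y(1)] y(2) by simp
  ultimately have "e (Suc m) (dE m y) = e (Suc m) x" by simp
  then have "e (Suc m) (dE m y - x) = 0"
    using ediff[OF cxd[OF cxE y(1)] x[unfolded Suc]] by simp
  then have "dE m y - x = 0" using einj cxdiff[OF cxE cxd[OF cxE y(1)] x[unfolded Suc]] by blast
  then show ?thesis using Suc y(1) by (auto simp: coboundaries_def)
qed

lemma dc_iso:
  "\<exists>\<psi>. \<psi> \<in> iso (cohomology E dE (+) 0 n) (cohomology (TT K) (DD a b) (+) 0 n) \<and>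
     (\<forall>x \<in> carrier (cocycle_grp E dE (+) 0 n). \<psi> (cohom_class E dE (+) 0 n x) = cohom_class (TT K) (DD a b) (+) 0 n (jj e n x))"
proof (rule chain_iso[OF cxE cxT])
  show "\<And>x. x \<in> E n \<Longrightarrow> jj e n x \<in> TT K n" by (rule jj_T)
  show "\<And>x y. x \<in> E n \<Longrightarrow> y \<in> E n \<Longrightarrow> jj e n (x + y) = jj e n x + jj e n y" by (rule jj_add)
  show "jj e n x \<in> coboundaries (TT K) (DD a b) 0 n" if xc: "x \<in> coboundaries E dE 0 n" for x
  proof (cases n)
    case 0 then show ?thesis using xc by (auto simp: coboundaries_def jj_def e_zero zero_fun_def)
  next
    case (Suc m)
    then obtain y where "y \<in> E m" "x = dE m y" using xc by (auto simp: coboundaries_def)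
    then have "jj e n x = DD a b m (jj e m y)" "jj e m y \<in> TT K m" using jj_chain jj_T Suc by auto
    then show ?thesis using Suc by (auto simp: coboundaries_def)
  qed
  show "DD a b n (jj e n x) = 0" if "x \<in> E n" "dE n x = 0" for x
    using that by (rule jj_cocycle)
  show "\<And>F. F \<in> TT K n \<Longrightarrow> DD a b n F = 0 \<Longrightarrow> \<exists>x\<in>E n. dE n x = 0 \<and> F - jj e n x \<in> coboundaries (TT K) (DD a b) 0 n"
    by (rule surj_j)
  show "\<And>x. x \<in> E n \<Longrightarrow> dE n x = 0 \<Longrightarrow> jj e n x \<in> coboundaries (TT K) (DD a b) 0 n \<Longrightarrow> x \<in> coboundaries E dE 0 n"
    by (rule inj_j)
qed

end

definition sw :: "nat \<Rightarrow> (nat \<Rightarrow> 'c::zero) \<Rightarrow> nat \<Rightarrow> 'c" where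
  "sw n F = (\<lambda>p. if p \<le> n then F (n - p) else 0)"

lemma sw_chain:
  assumes "\<forall>p>n. F p = 0"
  shows "sw (Suc n) (DD (\<lambda>p q. b q p) (\<lambda>p q. a q p) n F) = DD a b n (sw n F)"
proof (rule ext)
  fix p
  show "sw (Suc n) (DD (\<lambda>p q. b q p) (\<lambda>p q. a q p) n F) p = DD a b n (sw n F) p"
  proof (cases "p \<le> Suc n")
    case True
    show ?thesis
    proof (cases p)
      case 0 then show ?thesis by (simp add: sw_def DD_def)
    next
      case (Suc r)
      then have "r \<le> n" using True by simp
      then show ?thesis using Suc by (cases "r = n") (auto simp: sw_def DD_def Suc_diff_le add.commute)
    qed
  next
    case False
    then show ?thesis by (simp add: sw_def DD_def)
  qed
qed

lemma sw_sw: "\<forall>p>n. F p = 0 \<Longrightarrow> sw n (sw n F) = F"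
  by (rule ext) (auto simp: sw_def)

lemma sw_add: "sw n (F + G) = sw n F + sw n (G :: nat \<Rightarrow> 'c::monoid_add)"
  by (rule ext) (simp add: sw_def)

lemma sw_T: assumes "F \<in> TT (\<lambda>p q. K q p) n" shows "sw n F \<in> TT K n"
  unfolding TT_def sw_def
proof (intro CollectI conjI allI impI)
  fix p assume p: "p \<le> n"
  have "F (n - p) \<in> K (n - (n - p)) (n - p)" using assms by (simp add: TT_def)
  then show "(if p \<le> n then F (n - p) else 0) \<in> K p (n - p)" using p by simp
next
  fix p assume "n < p" then show "(if p \<le> n then F (n - p) else 0) = 0" by simp
qed

lemma sw_T': assumes "F \<in> TT K n" shows "sw n F \<in> TT (\<lambda>p q. K q p) n"
  unfolding TT_def sw_def
proof (intro CollectI conjI allI impI)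
  fix p assume p: "p \<le> n"
  have "F (n - p) \<in> K (n - p) (n - (n - p))" using assms by (simp add: TT_def)
  then show "(if p \<le> n then F (n - p) else 0) \<in> K (n - p) p" using p by simp
next
  fix p assume "n < p" then show "(if p \<le> n then F (n - p) else 0) = 0" by simp
qed

lemma (in dcx) dcx_t: "dcx (\<lambda>p q. K q p) (\<lambda>p q. b q p) (\<lambda>p q. a q p)"
  by (unfold_locales) (auto simp: K0 Kadd Kneg aK bK aadd badd aa bb ab[unfolded add.commute[of "a _ _ _"]])

lemma (in dcx) swap_iso:
  "\<exists>\<psi>. \<psi> \<in> iso (cohomology (TT (\<lambda>p q. K q p)) (DD (\<lambda>p q. b q p) (\<lambda>p q. a q p)) (+) 0 n)
        (cohomology (TT K) (DD a b) (+) 0 n) \<and>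
     (\<forall>x \<in> carrier (cocycle_grp (TT (\<lambda>p q. K q p)) (DD (\<lambda>p q. b q p) (\<lambda>p q. a q p)) (+) 0 n).
        \<psi> (cohom_class (TT (\<lambda>p q. K q p)) (DD (\<lambda>p q. b q p) (\<lambda>p q. a q p)) (+) 0 n x) =
        cohom_class (TT K) (DD a b) (+) 0 n (sw n x))"
proof -
  interpret t: dcx "\<lambda>p q. K q p" "\<lambda>p q. b q p" "\<lambda>p q. a q p" by (rule dcx_t)
  have T0: "\<forall>p>m. F p = 0" if "F \<in> TT L m" for F m and L :: "nat \<Rightarrow> nat \<Rightarrow> 'c set" using that by (simp add: TT_def)
  have swT': "G \<in> TT K m \<Longrightarrow> sw m G \<in> TT (\<lambda>p q. K q p) m" for G m by (rule sw_T')
  have ch2: "sw (Suc m) (DD a b m G) = DD (\<lambda>p q. b q p) (\<lambda>p q. a q p) m (sw m G)" if "G \<in> TT K m" for G m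
    using sw_chain[where a="\<lambda>p q. b q p" and b="\<lambda>p q. a q p", OF T0[OF that]] by simp
  show ?thesis
  proof (rule chain_iso[OF t.cxT cxT])
    show "\<And>x. x \<in> TT (\<lambda>p q. K q p) n \<Longrightarrow> sw n x \<in> TT K n" by (rule sw_T)
    show "\<And>x y :: nat \<Rightarrow> 'c. sw n (x + y) = sw n x + sw n y" by (rule ext) (simp add: sw_def)
    show "sw n x \<in> coboundaries (TT K) (DD a b) 0 n"
      if xc: "x \<in> coboundaries (TT (\<lambda>p q. K q p)) (DD (\<lambda>p q. b q p) (\<lambda>p q. a q p)) 0 n" for x
    proof (cases n)
      case 0 then show ?thesis using xc by (auto simp: coboundaries_def sw_def zero_fun_def)
    next
      case (Suc m)
      then obtain y where y: "y \<in> TT (\<lambda>p q. K q p) m" "x = DD (\<lambda>p q. b q p) (\<lambda>p q. a q p) m y" using xc by (auto simp: coboundaries_def)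
      have "sw n x = DD a b m (sw m y)" using sw_chain[OF T0[OF y(1)]] y(2) Suc by simp
      then show ?thesis using sw_T[OF y(1)] Suc by (auto simp: coboundaries_def)
    qed
    show "DD a b n (sw n x) = 0" if "x \<in> TT (\<lambda>p q. K q p) n" "DD (\<lambda>p q. b q p) (\<lambda>p q. a q p) n x = 0" for x
    proof -
      have "sw (Suc n) (DD (\<lambda>p q. b q p) (\<lambda>p q. a q p) n x) = DD a b n (sw n x)" by (rule sw_chain[OF T0[OF that(1)]])
      then show ?thesis using that(2) by (simp add: sw_def zero_fun_def)
    qed
    show "\<exists>x\<in>TT (\<lambda>p q. K q p) n. DD (\<lambda>p q. b q p) (\<lambda>p q. a q p) n x = 0 \<and> F - sw n x \<in> coboundaries (TT K) (DD a b) 0 n"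
      if F: "F \<in> TT K n" "DD a b n F = 0" for F
    proof (intro bexI conjI)
      show "sw n F \<in> TT (\<lambda>p q. K q p) n" by (rule swT'[OF F(1)])
      have "sw (Suc n) (DD a b n F) = DD (\<lambda>p q. b q p) (\<lambda>p q. a q p) n (sw n F)" by (rule ch2[OF F(1)])
      then show "DD (\<lambda>p q. b q p) (\<lambda>p q. a q p) n (sw n F) = 0" using F(2) by (simp add: sw_def zero_fun_def)
      show "F - sw n (sw n F) \<in> coboundaries (TT K) (DD a b) 0 n" using sw_sw[OF T0[OF F(1)]] cob_0[OF cxT] by simp
    qed
    show "x \<in> coboundaries (TT (\<lambda>p q. K q p)) (DD (\<lambda>p q. b q p) (\<lambda>p q. a q p)) 0 n"
      if x: "x \<in> TT (\<lambda>p q. K q p) n" "DD (\<lambda>p q. b q p) (\<lambda>p q. a q p) n x = 0" "sw n x \<in> coboundaries (TT K) (DD a b) 0 n" for x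
    proof (cases n)
      case 0 then have "sw 0 x = 0" using x(3) by (simp add: coboundaries_def)
      then have "x = 0" using sw_sw[OF T0[OF x(1)]] 0 by (simp add: sw_def zero_fun_def)
      then show ?thesis using 0 by (simp add: coboundaries_def)
    next
      case (Suc m)
      then obtain G where G: "G \<in> TT K m" "sw n x = DD a b m G" using x(3) by (auto simp: coboundaries_def)
      have "x = sw n (sw n x)" using sw_sw[OF T0[OF x(1)]] by simp
      also have "\<dots> = DD (\<lambda>p q. b q p) (\<lambda>p q. a q p) m (sw m G)" using G(2) ch2[OF G(1)] Suc by simp
      finally show ?thesis using swT'[OF G(1)] Suc by (auto simp: coboundaries_def)
    qed
  qed
qed


declare sum.atMost_Suc[simp del]

definition sg :: "nat \<Rightarrow> 'a::group_add \<Rightarrow> 'a" where "sg i a = (if even i then a else - a)"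

lemma tuples_iff: "x \<in> gc_tuples n \<longleftrightarrow> (\<forall>k>n. x k = undefined)"
  by (auto simp: gc_tuples_def PiE_def extensional_def)

lemma face_tuples[simp]: "gc_face n i x \<in> gc_tuples n"
  by (simp add: gc_face_def gc_tuples_def)

lemma ltrans_tuples[simp]: "gc_ltrans g n x \<in> gc_tuples n"
  by (simp add: gc_ltrans_def gc_tuples_def)

lemma face_ltrans: "gc_face n i (gc_ltrans g (Suc n) x) = gc_ltrans g n (gc_face n i x)"
  by (rule ext) (auto simp: gc_face_def gc_ltrans_def)

lemma ltrans_ltrans: "gc_ltrans g n (gc_ltrans h n x) = gc_ltrans (g + h) n x"
  by (rule ext) (auto simp: gc_ltrans_def add.assoc)

lemma ltrans_0: "x \<in> gc_tuples n \<Longrightarrow> gc_ltrans 0 n x = x"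
  by (rule ext) (auto simp: gc_ltrans_def tuples_iff)

lemma face_face: "j < i \<Longrightarrow> gc_face n j (gc_face (Suc n) i x) = gc_face n (i - 1) (gc_face (Suc n) j x)"
  by (rule ext) (auto simp: gc_face_def)

lemma sg_sg: "sg i (sg j a) = sg j (sg i a)" by (auto simp: sg_def)
lemma sg_Suc: "sg (Suc i) a = - sg i a" by (auto simp: sg_def)
lemma sg_sum: "sg i (\<Sum>j\<in>A. f j) = (\<Sum>j\<in>A. sg i (f j :: 'a::ab_group_add))" by (auto simp: sg_def sum_negf)
lemma sg_add: "sg i (a + b) = sg i a + sg i (b :: 'a::ab_group_add)" by (auto simp: sg_def)

lemma simplicial:
  fixes f :: "(nat \<Rightarrow> 'g) \<Rightarrow> 'a::ab_group_add"
  shows "(\<Sum>i\<le>Suc (Suc n). sg i (\<Sum>j\<le>Suc n. sg j (f (gc_face n j (gc_face (Suc n) i x))))) = 0" (is "?L = 0")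
proof -
  define g where "g i j = sg i (sg j (f (gc_face n j (gc_face (Suc n) i x))))" for i j
  define P where "P = {..Suc (Suc n)} \<times> {..Suc n}"
  define P1 where "P1 = {ij \<in> P. snd ij < fst ij}"
  define P2 where "P2 = {ij \<in> P. \<not> snd ij < fst ij}"
  have "?L = (\<Sum>(i,j)\<in>P. g i j)"
    unfolding P_def g_def sg_sum by (rule sum.cartesian_product)
  also have "\<dots> = (\<Sum>(i,j)\<in>P1. g i j) + (\<Sum>(i,j)\<in>P2. g i j)"
  proof -
    have "P = P1 \<union> P2" "P1 \<inter> P2 = {}" "finite P1" "finite P2" unfolding P1_def P2_def P_def by auto
    then show ?thesis by (simp add: sum.union_disjoint)
  qed
  also have "(\<Sum>(i,j)\<in>P1. g i j) = (\<Sum>(i,j)\<in>P2. g (Suc j) i)"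
    by (rule sum.reindex_bij_witness[of _ "\<lambda>(i,j). (Suc j, i)" "\<lambda>(i,j). (j, i - 1)"])
       (auto simp: P1_def P2_def P_def)
  also have "\<dots> = (\<Sum>(i,j)\<in>P2. - g i j)"
  proof (rule sum.cong[OF refl])
    fix ij assume a: "ij \<in> P2"
    obtain i j where ij0: "ij = (i, j)" by (cases ij)
    have ij: "ij = (i, j)" "i \<le> j" using a ij0 by (auto simp: P2_def)
    have "gc_face n i (gc_face (Suc n) (Suc j) x) = gc_face n j (gc_face (Suc n) i x)"
      using face_face[of i "Suc j" n x] ij by simp
    then show "(case ij of (i, j) \<Rightarrow> g (Suc j) i) = (case ij of (i, j) \<Rightarrow> - g i j)"
      using ij by (simp add: g_def sg_Suc sg_sg[of i] sg_def)
  qed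
  finally have eq: "?L = (\<Sum>(i,j)\<in>P2. - g i j) + (\<Sum>(i,j)\<in>P2. g i j)" .
  have neg: "(\<Sum>(i,j)\<in>P2. - g i j) = - (\<Sum>(i,j)\<in>P2. g i j)" unfolding split_def by (rule sum_negf)
  show ?thesis unfolding eq neg by simp
qed

lemma gc_d_add: "gc_d n (f + g) = gc_d n f + gc_d n g"
  by (rule ext) (auto simp: gc_d_def sum.distrib[symmetric] intro!: sum.cong)

lemma d_h_add: "d_h p q (f + g) = d_h p q f + d_h p q g"
  by (rule ext)+ (auto simp: d_h_def sum.distrib[symmetric] intro!: sum.cong)


lemma gc_d_sg: "gc_d n f = (\<lambda>x. if x \<in> gc_tuples (Suc n) then (\<Sum>i\<le>Suc n. sg i (f (gc_face n i x))) else 0)"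
  unfolding gc_d_def sg_def by (rule refl)

lemma d_h_sg: "d_h p q f = (\<lambda>x y. if x \<in> gc_tuples (Suc p) \<and> y \<in> gc_tuples q
      then (\<Sum>i\<le>Suc p. sg i (f (gc_face p i x) y)) else 0)"
  unfolding d_h_def sg_def by (rule refl)

lemma d_v_sg: "d_v p q f = (\<lambda>x y. if x \<in> gc_tuples p \<and> y \<in> gc_tuples (Suc q)
      then sg p (\<Sum>i\<le>Suc q. sg i (f x (gc_face q i y))) else 0)"
  unfolding d_v_def sg_def Let_def by (rule refl)

lemma d_v_add: "d_v p q (f + g) = d_v p q f + d_v p q g"
  by (rule ext)+ (simp add: d_v_sg sg_add sum.distrib)

lemma gc_dd: "gc_d (Suc n) (gc_d n f) = 0"
proof (rule ext)
  fix x show "gc_d (Suc n) (gc_d n f) x = 0 x"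
    by (simp add: gc_d_sg simplicial[where n=n and f=f and x=x])
qed

lemma d_hh: "d_h (Suc p) q (d_h p q f) = 0"
proof (rule ext)+
  fix x y show "d_h (Suc p) q (d_h p q f) x y = 0 x y"
    by (simp add: d_h_sg simplicial[where n=p and f="\<lambda>x. f x y" and x=x])
qed

lemma sg_sg_same: "sg p (sg p a) = a" by (simp add: sg_def)

lemma d_vv: "d_v p (Suc q) (d_v p q f) = 0"
proof (rule ext)+
  fix x y
  show "d_v p (Suc q) (d_v p q f) x y = 0 x y"
    by (simp add: d_v_sg sg_sum[symmetric] sg_sg[of _ p] sg_sg_same simplicial[where n=q and f="f x" and x=y])
qed

lemma sg_comm_sum: "sg i (sg p (\<Sum>j\<in>A. g j)) = sg p (\<Sum>j\<in>A. sg i (g j :: 'a::ab_group_add))"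
  by (auto simp: sg_def sum_negf)

lemma sg_sg_swap: "sg i (sg j a) = sg j (sg i a)" by (auto simp: sg_def)

lemma d_vh: "d_v (Suc p) q (d_h p q f) + d_h p (Suc q) (d_v p q f) = 0"
proof (rule ext)+
  fix x y
  show "(d_v (Suc p) q (d_h p q f) + d_h p (Suc q) (d_v p q f)) x y = 0 x y"
  proof (cases "x \<in> gc_tuples (Suc p) \<and> y \<in> gc_tuples (Suc q)")
    case True
    have "d_h p (Suc q) (d_v p q f) x y = (\<Sum>i\<le>Suc p. sg i (sg p (\<Sum>j\<le>Suc q. sg j (f (gc_face p i x) (gc_face q j y)))))"
      using True by (simp add: d_v_sg d_h_sg)
    also have "\<dots> = (\<Sum>i\<le>Suc p. sg p (\<Sum>j\<le>Suc q. sg i (sg j (f (gc_face p i x) (gc_face q j y)))))"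
      by (rule sum.cong[OF refl]) (simp add: sg_comm_sum)
    also have "\<dots> = sg p (\<Sum>i\<le>Suc p. \<Sum>j\<le>Suc q. sg i (sg j (f (gc_face p i x) (gc_face q j y))))"
      by (rule sg_sum[symmetric])
    also have "(\<Sum>i\<le>Suc p. \<Sum>j\<le>Suc q. sg i (sg j (f (gc_face p i x) (gc_face q j y))))
       = (\<Sum>j\<le>Suc q. \<Sum>i\<le>Suc p. sg i (sg j (f (gc_face p i x) (gc_face q j y))))"
      by (rule sum.swap)
    also have "\<dots> = (\<Sum>j\<le>Suc q. sg j (\<Sum>i\<le>Suc p. sg i (f (gc_face p i x) (gc_face q j y))))"
      by (rule sum.cong[OF refl]) (simp add: sg_sum sg_sg_swap)
    finally have 1: "d_h p (Suc q) (d_v p q f) x y = sg p (\<Sum>j\<le>Suc q. sg j (\<Sum>i\<le>Suc p. sg i (f (gc_face p i x) (gc_face q j y))))" .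
    have 2: "d_v (Suc p) q (d_h p q f) x y = sg (Suc p) (\<Sum>j\<le>Suc q. sg j (\<Sum>i\<le>Suc p. sg i (f (gc_face p i x) (gc_face q j y))))"
      using True by (simp add: d_v_sg d_h_sg)
    show ?thesis using 1 2 by (simp add: sg_Suc)
  next
    case False
    then show ?thesis by (auto simp: d_v_sg d_h_sg)
  qed
qed


lemma cm_add:
  fixes f g :: "'x \<Rightarrow> 'b::topological_monoid_add"
  shows "continuous_map X euclidean f \<Longrightarrow> continuous_map X euclidean g \<Longrightarrow> continuous_map X euclidean (\<lambda>x. f x + g x)"
  by (simp add: continuous_map_atin tendsto_add)

lemma cm_neg:
  fixes f :: "'x \<Rightarrow> 'b::topological_group_add"
  shows "continuous_map X euclidean f \<Longrightarrow> continuous_map X euclidean (\<lambda>x. - f x)"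
  by (simp add: continuous_map_atin tendsto_minus)

lemma cm_sum:
  fixes f :: "'i \<Rightarrow> 'x \<Rightarrow> 'b::topological_comm_monoid_add"
  shows "finite I \<Longrightarrow> (\<And>i. i \<in> I \<Longrightarrow> continuous_map X euclidean (f i)) \<Longrightarrow> continuous_map X euclidean (\<lambda>x. \<Sum>i\<in>I. f i x)"
  by (simp add: continuous_map_atin tendsto_sum)

lemma cm_sg:
  fixes f :: "'x \<Rightarrow> 'b::topological_group_add"
  shows "continuous_map X euclidean f \<Longrightarrow> continuous_map X euclidean (\<lambda>x. sg i (f x))"
  by (cases "even i") (simp_all add: sg_def cm_neg)

lemma tt_topspace[simp]: "topspace (gc_tuple_top n) = gc_tuples n"
  by (simp add: gc_tuple_top_def gc_tuples_def)

lemma cm_proj: "k \<le> n \<Longrightarrow> continuous_map (gc_tuple_top n) euclidean (\<lambda>x. x k)"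
  unfolding gc_tuple_top_def using continuous_map_product_projection[of k "{..n}" "\<lambda>_. euclidean"] by simp

lemma cm_into_tt:
  assumes "\<And>x. x \<in> topspace X \<Longrightarrow> f x \<in> gc_tuples n" "\<And>k. k \<le> n \<Longrightarrow> continuous_map X euclidean (\<lambda>x. f x k)"
  shows "continuous_map X (gc_tuple_top n) f"
  unfolding gc_tuple_top_def continuous_map_componentwise
  using assms by (auto simp: gc_tuples_def PiE_def)

lemma cm_face: "continuous_map (gc_tuple_top (Suc n)) (gc_tuple_top n) (gc_face n i)"
proof (rule cm_into_tt)
  fix k assume k: "k \<le> n"
  show "continuous_map (gc_tuple_top (Suc n)) euclidean (\<lambda>x. gc_face n i x k)"
  proof (cases "k < i")
    case True
    then show ?thesis using cm_proj[of k "Suc n"] k by (simp add: gc_face_def)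
  next
    case False
    then show ?thesis using cm_proj[of "Suc k" "Suc n"] k by (simp add: gc_face_def)
  qed
qed simp

lemma gamma_sub: "gc_Gamma U q \<subseteq> gc_tuples q"
  by (auto simp: gc_Gamma_def)

lemma gamma_mono: "U \<subseteq> V \<Longrightarrow> gc_Gamma U q \<subseteq> gc_Gamma V q"
  by (auto simp: gc_Gamma_def)

lemma gamma_0[simp]: "gc_Gamma U 0 = gc_tuples 0"
  by (simp add: gc_Gamma_def)

lemma gamma_face: assumes "y \<in> gc_Gamma U (Suc q)" shows "gc_face q i y \<in> gc_Gamma U q"
proof (cases q)
  case 0 then show ?thesis by simp
next
  case (Suc r)
  have y: "\<And>a b. a \<le> Suc q \<Longrightarrow> b \<le> Suc q \<Longrightarrow> - y a + y b \<in> U" using assms by (auto simp: gc_Gamma_def)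
  show ?thesis using Suc
    by (auto simp: gc_Gamma_def gc_face_def gc_tuples_def intro!: y)
qed

lemma gamma_ltrans: assumes "y \<in> gc_Gamma U q" shows "gc_ltrans g q y \<in> gc_Gamma U q"
  using assms by (auto simp: gc_Gamma_def gc_ltrans_def gc_tuples_def minus_add add.assoc[symmetric])

lemma nbhd_Int: "gc_identity_nbhd U \<Longrightarrow> gc_identity_nbhd V \<Longrightarrow> gc_identity_nbhd (U \<inter> V)"
  unfolding gc_identity_nbhd_def by (metis Int_mono open_Int IntI)

lemma nbhd_UNIV: "gc_identity_nbhd UNIV"
  unfolding gc_identity_nbhd_def by auto

abbreviation ST :: "nat \<Rightarrow> 'g::topological_group_add set \<Rightarrow> nat \<Rightarrow> ((nat \<Rightarrow> 'g) \<times> (nat \<Rightarrow> 'g)) topology" where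
  "ST p U q \<equiv> subtopology (prod_topology (gc_tuple_top p) (gc_tuple_top q)) (gc_tuples p \<times> gc_Gamma U q)"

lemma ST_topspace[simp]: "topspace (ST p U q) = gc_tuples p \<times> gc_Gamma U q"
  using gamma_sub by auto

lemma ST_mono: "V \<subseteq> U \<Longrightarrow> continuous_map (ST p U q) X f \<Longrightarrow> continuous_map (ST p V q) X f"
proof -
  assume a: "V \<subseteq> U" "continuous_map (ST p U q) X f"
  have "gc_tuples p \<times> gc_Gamma V q \<subseteq> gc_tuples p \<times> gc_Gamma U q" using gamma_mono[OF a(1)] by blast
  then show ?thesis using continuous_map_from_subtopology_mono[OF a(2)] by blast
qed

lemma cm_ST_fst: "continuous_map (ST p U q) (gc_tuple_top p) fst"
  by (rule continuous_map_from_subtopology) (rule continuous_map_fst)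

lemma cm_ST_snd: "continuous_map (ST p U q) (gc_tuple_top q) snd"
  by (rule continuous_map_from_subtopology) (rule continuous_map_snd)

lemma cm_into_ST:
  assumes "continuous_map X (gc_tuple_top p) (\<lambda>z. fst (m z))" "continuous_map X (gc_tuple_top q) (\<lambda>z. snd (m z))"
    "\<And>z. z \<in> topspace X \<Longrightarrow> m z \<in> gc_tuples p \<times> gc_Gamma U q"
  shows "continuous_map X (ST p U q) m"
proof (rule continuous_map_into_subtopology)
  have "continuous_map X (prod_topology (gc_tuple_top p) (gc_tuple_top q)) (\<lambda>z. (fst (m z), snd (m z)))"
    using assms by (intro continuous_map_pairedI)
  then show "continuous_map X (prod_topology (gc_tuple_top p) (gc_tuple_top q)) m" by simp
  show "m \<in> topspace X \<rightarrow> gc_tuples p \<times> gc_Gamma U q" using assms(3) by blast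
qed

lemma cm_comp: "continuous_map X Y m \<Longrightarrow> continuous_map Y Z f \<Longrightarrow> continuous_map X Z (\<lambda>z. f (m z))"
  using continuous_map_compose[of X Y m Z f] by (simp add: o_def)


definition AC :: "nat \<Rightarrow> nat \<Rightarrow> 'g::topological_group_add set \<Rightarrow> ('g, 'a::topological_ab_group_add) bicochain \<Rightarrow> bool" where
  "AC p q U f \<longleftrightarrow> continuous_map (ST p U q) euclidean (\<lambda>z. f (fst z) (snd z))"

lemma Alc_iff: "f \<in> Alc act p q \<longleftrightarrow> (\<forall>x y. \<not> (x \<in> gc_tuples p \<and> y \<in> gc_tuples q) \<longrightarrow> f x y = 0) \<and>
   (\<exists>U. gc_identity_nbhd U \<and> AC p q U f)"
  by (simp add: Alc_def AC_def case_prod_beta')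

lemma AC_mono: "V \<subseteq> U \<Longrightarrow> AC p q U f \<Longrightarrow> AC p q V f"
  unfolding AC_def by (rule ST_mono)

lemma AC_add: "AC p q U f \<Longrightarrow> AC p q U g \<Longrightarrow> AC p q U (f + g)"
  unfolding AC_def by (simp add: cm_add)

lemma AC_neg: "AC p q U f \<Longrightarrow> AC p q U (- f)"
  unfolding AC_def by (simp add: cm_neg)

lemma AC_0: "AC p q U 0"
  unfolding AC_def by simp

lemma AC_dv: assumes "AC p q U f" shows "AC p (Suc q) U (d_v p q f)"
proof -
  have m: "continuous_map (ST p U (Suc q)) (ST p U q) (\<lambda>z. (fst z, gc_face q i (snd z)))" for i
    by (rule cm_into_ST) (auto intro: cm_ST_fst cm_comp[OF cm_ST_snd cm_face] gamma_face)
  have "continuous_map (ST p U (Suc q)) euclidean (\<lambda>z. sg p (\<Sum>i\<le>Suc q. sg i (f (fst z) (gc_face q i (snd z)))))"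
    apply (rule cm_sg, rule cm_sum, simp)
    apply (rule cm_sg)
    using cm_comp[OF m assms[unfolded AC_def]] by simp
  then show ?thesis unfolding AC_def
    by (rule continuous_map_eq) (use gamma_sub in \<open>auto simp: d_v_sg\<close>)
qed

lemma AC_dh: assumes "AC p q U f" shows "AC (Suc p) q U (d_h p q f)"
proof -
  have m: "continuous_map (ST (Suc p) U q) (ST p U q) (\<lambda>z. (gc_face p i (fst z), snd z))" for i
    by (rule cm_into_ST) (auto intro: cm_ST_snd cm_comp[OF cm_ST_fst cm_face])
  have "continuous_map (ST (Suc p) U q) euclidean (\<lambda>z. \<Sum>i\<le>Suc p. sg i (f (gc_face p i (fst z)) (snd z)))"
    apply (rule cm_sum, simp)
    apply (rule cm_sg)
    using cm_comp[OF m assms[unfolded AC_def]] by simp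
  then show ?thesis unfolding AC_def
    by (rule continuous_map_eq) (use gamma_sub in \<open>auto simp: d_h_sg\<close>)
qed

context
  fixes act :: "'g::topological_group_add \<Rightarrow> 'a::topological_ab_group_add \<Rightarrow> 'a"
  assumes tm: "topological_G_module act"
begin

lemma act_add: "act g (a + b) = act g a + act g b" using tm by (simp add: topological_G_module_def)
lemma act_comp: "act (g + h) a = act g (act h a)" using tm by (simp add: topological_G_module_def)
lemma act_id: "act 0 a = a" using tm by (simp add: topological_G_module_def)
lemma act_0[simp]: "act g 0 = 0" using act_add[of g 0 0] by simp
lemma act_neg: "act g (- a) = - act g a" using act_add[of g a "-a"] by (simp add: eq_neg_iff_add_eq_0 add.commute)
lemma act_sum: "act g (\<Sum>i\<in>I. f i) = (\<Sum>i\<in>I. act g (f i))"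
  by (induction I rule: infinite_finite_induct) (simp_all add: act_add)
lemma act_sg: "act g (sg i a) = sg i (act g a)" by (simp add: sg_def act_neg)

lemma cm_act: "continuous_map X euclidean u \<Longrightarrow> continuous_map X euclidean v \<Longrightarrow> continuous_map X euclidean (\<lambda>z. act (u z) (v z))"
proof -
  assume u: "continuous_map X euclidean u" and v: "continuous_map X euclidean v"
  have "continuous_map X (prod_topology euclidean euclidean) (\<lambda>z. (u z, v z))" using u v by (intro continuous_map_pairedI)
  then have 1: "continuous_map X euclidean (\<lambda>z. (u z, v z))" by simp
  have 2: "continuous_map euclidean euclidean (\<lambda>p. act (fst p) (snd p))" using tm by (simp add: topological_G_module_def)
  show ?thesis using cm_comp[OF 1 2] by simp
qed

definition ginv :: "nat \<Rightarrow> nat \<Rightarrow> ('g, 'a) bicochain \<Rightarrow> bool" where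
  "ginv p q f \<longleftrightarrow> (\<forall>g. \<forall>x\<in>gc_tuples p. \<forall>y\<in>gc_tuples q. act g (f (gc_ltrans (- g) p x) (gc_ltrans (- g) q y)) = f x y)"

lemma AlcG_iff: "f \<in> Alc_G act p q \<longleftrightarrow> f \<in> Alc act p q \<and> ginv p q f"
  by (simp add: Alc_G_def ginv_def)

lemma Alc_0: "0 \<in> Alc act p q"
  unfolding Alc_iff using AC_0 nbhd_UNIV by auto

lemma Alc_add: assumes "f \<in> Alc act p q" "g \<in> Alc act p q" shows "f + g \<in> Alc act p q"
proof -
  obtain U V where U: "gc_identity_nbhd U" "AC p q U f" and V: "gc_identity_nbhd V" "AC p q V g"
    using assms unfolding Alc_iff by blast
  have "AC p q (U \<inter> V) (f + g)" using AC_add[OF AC_mono[OF _ U(2)] AC_mono[OF _ V(2)]] by blast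
  then show ?thesis using assms nbhd_Int[OF U(1) V(1)] unfolding Alc_iff by auto
qed

lemma Alc_neg: assumes "f \<in> Alc act p q" shows "- f \<in> Alc act p q"
  using assms AC_neg unfolding Alc_iff by fastforce

lemma Alc_dv: assumes "f \<in> Alc act p q" shows "d_v p q f \<in> Alc act p (Suc q)"
proof -
  obtain U where U: "gc_identity_nbhd U" "AC p q U f" using assms unfolding Alc_iff by blast
  show ?thesis unfolding Alc_iff using U AC_dv[OF U(2)] by (auto simp: d_v_def)
qed

lemma Alc_dh: assumes "f \<in> Alc act p q" shows "d_h p q f \<in> Alc act (Suc p) q"
proof -
  obtain U where U: "gc_identity_nbhd U" "AC p q U f" using assms unfolding Alc_iff by blast
  show ?thesis unfolding Alc_iff using U AC_dh[OF U(2)] by (auto simp: d_h_def)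
qed

lemma ginv_0: "ginv p q 0" by (simp add: ginv_def)
lemma ginv_add: "ginv p q f \<Longrightarrow> ginv p q g \<Longrightarrow> ginv p q (f + g)" by (simp add: ginv_def act_add)
lemma ginv_neg: "ginv p q f \<Longrightarrow> ginv p q (- f)" by (simp add: ginv_def act_neg)

lemma ginv_dv: assumes "ginv p q f" shows "ginv p (Suc q) (d_v p q f)"
  unfolding ginv_def
proof (intro allI ballI)
  fix g :: 'g and x y :: "nat \<Rightarrow> 'g" assume x: "x \<in> gc_tuples p" and y: "y \<in> gc_tuples (Suc q)"
  have "act g (d_v p q f (gc_ltrans (- g) p x) (gc_ltrans (- g) (Suc q) y))
     = sg p (\<Sum>i\<le>Suc q. sg i (act g (f (gc_ltrans (- g) p x) (gc_ltrans (- g) q (gc_face q i y)))))"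
    by (simp add: d_v_sg face_ltrans act_sg act_sum)
  also have "\<dots> = sg p (\<Sum>i\<le>Suc q. sg i (f x (gc_face q i y)))"
    using assms x unfolding ginv_def by simp
  finally show "act g (d_v p q f (gc_ltrans (- g) p x) (gc_ltrans (- g) (Suc q) y)) = d_v p q f x y"
    using x y by (simp add: d_v_sg)
qed

lemma ginv_dh: assumes "ginv p q f" shows "ginv (Suc p) q (d_h p q f)"
  unfolding ginv_def
proof (intro allI ballI)
  fix g :: 'g and x y :: "nat \<Rightarrow> 'g" assume x: "x \<in> gc_tuples (Suc p)" and y: "y \<in> gc_tuples q"
  have "act g (d_h p q f (gc_ltrans (- g) (Suc p) x) (gc_ltrans (- g) q y))
     = (\<Sum>i\<le>Suc p. sg i (act g (f (gc_ltrans (- g) p (gc_face p i x)) (gc_ltrans (- g) q y))))"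
    by (simp add: d_h_sg face_ltrans act_sg act_sum)
  also have "\<dots> = (\<Sum>i\<le>Suc p. sg i (f (gc_face p i x) y))"
    using assms y unfolding ginv_def by simp
  finally show "act g (d_h p q f (gc_ltrans (- g) (Suc p) x) (gc_ltrans (- g) q y)) = d_h p q f x y"
    using x y by (simp add: d_h_sg)
qed

lemma AlcG_0: "0 \<in> Alc_G act p q" by (simp add: AlcG_iff Alc_0 ginv_0)
lemma AlcG_add: "f \<in> Alc_G act p q \<Longrightarrow> g \<in> Alc_G act p q \<Longrightarrow> f + g \<in> Alc_G act p q"
  by (simp add: AlcG_iff Alc_add ginv_add)
lemma AlcG_neg: "f \<in> Alc_G act p q \<Longrightarrow> - f \<in> Alc_G act p q"
  by (simp add: AlcG_iff Alc_neg ginv_neg)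
lemma AlcG_dv: "f \<in> Alc_G act p q \<Longrightarrow> d_v p q f \<in> Alc_G act p (Suc q)"
  by (simp add: AlcG_iff Alc_dv ginv_dv)
lemma AlcG_dh: "f \<in> Alc_G act p q \<Longrightarrow> d_h p q f \<in> Alc_G act (Suc p) q"
  by (simp add: AlcG_iff Alc_dh ginv_dh)

lemma dcx_inst: "dcx (Alc_G act) d_v d_h"
proof
  show "\<And>p q. 0 \<in> Alc_G act p q" by (rule AlcG_0)
  show "\<And>p q x y. x \<in> Alc_G act p q \<Longrightarrow> y \<in> Alc_G act p q \<Longrightarrow> x + y \<in> Alc_G act p q" by (rule AlcG_add)
  show "\<And>p q x. x \<in> Alc_G act p q \<Longrightarrow> - x \<in> Alc_G act p q" by (rule AlcG_neg)
  show "\<And>p q x. x \<in> Alc_G act p q \<Longrightarrow> d_v p q x \<in> Alc_G act p (Suc q)" by (rule AlcG_dv)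
  show "\<And>p q x. x \<in> Alc_G act p q \<Longrightarrow> d_h p q x \<in> Alc_G act (Suc p) q" by (rule AlcG_dh)
  show "\<And>p q x y. d_v p q (x + y) = d_v p q x + d_v p q y" by (rule d_v_add)
  show "\<And>p q x y. d_h p q (x + y) = d_h p q x + d_h p q y" by (rule d_h_add)
  show "\<And>p q x. d_v p (Suc q) (d_v p q x) = 0" by (rule d_vv)
  show "\<And>p q x. d_h (Suc p) q (d_h p q x) = 0" by (rule d_hh)
  show "\<And>p q x. d_v (Suc p) q (d_h p q x) + d_h p (Suc q) (d_v p q x) = 0" by (rule d_vh)
qed

end

definition aug2 :: "nat \<Rightarrow> ((nat \<Rightarrow> 'g) \<Rightarrow> 'a::ab_group_add) \<Rightarrow> ('g, 'a) bicochain" where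
  "aug2 p f = (\<lambda>x y. if x \<in> gc_tuples 0 \<and> y \<in> gc_tuples p then f y else 0)"

definition pt0 :: "nat \<Rightarrow> 'g" where "pt0 = (\<lambda>_. undefined)"

lemma pt0_tuples[simp]: "pt0 \<in> gc_tuples 0" by (simp add: pt0_def tuples_iff)

lemma cm_face_sub: "continuous_map (subtopology (gc_tuple_top (Suc n)) (gc_Gamma U (Suc n))) (subtopology (gc_tuple_top n) (gc_Gamma U n)) (gc_face n i)"
  by (rule continuous_map_into_subtopology[OF continuous_map_from_subtopology[OF cm_face]]) (auto intro: gamma_face)

context
  fixes act :: "'g::topological_group_add \<Rightarrow> 'a::topological_ab_group_add \<Rightarrow> 'a"
  assumes tm: "topological_G_module act"
begin

lemma equiv_0: "gc_equivariant act n (\<lambda>_. 0)" by (simp add: gc_equivariant_def act_0[OF tm])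
lemma equiv_add: "gc_equivariant act n f \<Longrightarrow> gc_equivariant act n g \<Longrightarrow> gc_equivariant act n (\<lambda>z. f z + g z)"
  by (simp add: gc_equivariant_def act_add[OF tm])
lemma equiv_neg: "gc_equivariant act n f \<Longrightarrow> gc_equivariant act n (\<lambda>z. - f z)"
  by (simp add: gc_equivariant_def act_neg[OF tm])
lemma equiv_d: assumes "gc_equivariant act n f" shows "gc_equivariant act (Suc n) (gc_d n f)"
  unfolding gc_equivariant_def
proof (intro allI ballI)
  fix g :: 'g and x :: "nat \<Rightarrow> 'g" assume x: "x \<in> gc_tuples (Suc n)"
  have "act g (gc_d n f (gc_ltrans (- g) (Suc n) x)) = (\<Sum>i\<le>Suc n. sg i (act g (f (gc_ltrans (- g) n (gc_face n i x)))))"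
    by (simp add: gc_d_sg face_ltrans act_sg[OF tm] act_sum[OF tm])
  also have "\<dots> = (\<Sum>i\<le>Suc n. sg i (f (gc_face n i x)))" using assms unfolding gc_equivariant_def by simp
  finally show "act g (gc_d n f (gc_ltrans (- g) (Suc n) x)) = gc_d n f x" using x by (simp add: gc_d_sg)
qed

lemma cx_Cc: "cx (Cc act) gc_d"
  unfolding cx_def
proof (intro allI conjI ballI)
  fix n
  show "0 \<in> Cc act n" unfolding Cc_def using equiv_0 by (simp add: zero_fun_def)
  show "x + y \<in> Cc act n" if "x \<in> Cc act n" "y \<in> Cc act n" for x y
    using that by (auto simp: Cc_def equiv_add plus_fun_def intro: cm_add)
  show "- x \<in> Cc act n" if "x \<in> Cc act n" for x
    using that by (auto simp: Cc_def equiv_neg fun_Compl_def intro: cm_neg)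
  show "gc_d n x \<in> Cc act (Suc n)" if x: "x \<in> Cc act n" for x
  proof -
    have c: "continuous_map (gc_tuple_top n) euclidean x" using x by (simp add: Cc_def)
    have "continuous_map (gc_tuple_top (Suc n)) euclidean (\<lambda>z. \<Sum>i\<le>Suc n. sg i (x (gc_face n i z)))"
      by (intro cm_sum cm_sg cm_comp[OF cm_face c]) simp
    then have "continuous_map (gc_tuple_top (Suc n)) euclidean (gc_d n x)"
      by (rule continuous_map_eq) (simp add: gc_d_sg)
    then show ?thesis using x equiv_d by (auto simp: Cc_def gc_d_def)
  qed
  show "gc_d n (x + y) = gc_d n x + gc_d n y" for x y by (rule gc_d_add)
  show "gc_d (Suc n) (gc_d n x) = 0" for x by (rule gc_dd)
qed

lemma Clc_iff: "f \<in> Clc act n \<longleftrightarrow> (\<forall>x. x \<notin> gc_tuples n \<longrightarrow> f x = 0) \<and>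
  (\<exists>U. gc_identity_nbhd U \<and> continuous_map (subtopology (gc_tuple_top n) (gc_Gamma U n)) euclidean f) \<and> gc_equivariant act n f"
  by (simp add: Clc_def)

lemma CL_mono: "V \<subseteq> U \<Longrightarrow> continuous_map (subtopology (gc_tuple_top n) (gc_Gamma U n)) X f \<Longrightarrow>
   continuous_map (subtopology (gc_tuple_top n) (gc_Gamma V n)) X f"
  using continuous_map_from_subtopology_mono gamma_mono by blast

lemma cx_Clc: "cx (Clc act) gc_d"
  unfolding cx_def
proof (intro allI conjI ballI)
  fix n
  show "0 \<in> Clc act n" unfolding Clc_iff using nbhd_UNIV equiv_0 by (auto simp: zero_fun_def)
  show "x + y \<in> Clc act n" if xy: "x \<in> Clc act n" "y \<in> Clc act n" for x y
  proof -
    obtain U V where U: "gc_identity_nbhd U" "continuous_map (subtopology (gc_tuple_top n) (gc_Gamma U n)) euclidean x"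
      and V: "gc_identity_nbhd V" "continuous_map (subtopology (gc_tuple_top n) (gc_Gamma V n)) euclidean y"
      using xy unfolding Clc_iff by blast
    have "continuous_map (subtopology (gc_tuple_top n) (gc_Gamma (U \<inter> V) n)) euclidean (\<lambda>z. x z + y z)"
      by (intro cm_add CL_mono[OF _ U(2)] CL_mono[OF _ V(2)]) auto
    then show ?thesis using xy nbhd_Int[OF U(1) V(1)] unfolding Clc_iff by (auto simp: equiv_add plus_fun_def)
  qed
  show "- x \<in> Clc act n" if "x \<in> Clc act n" for x
    using that unfolding Clc_iff by (auto simp: equiv_neg fun_Compl_def intro: cm_neg)
  show "gc_d n x \<in> Clc act (Suc n)" if x: "x \<in> Clc act n" for x
  proof -
    obtain U where U: "gc_identity_nbhd U" "continuous_map (subtopology (gc_tuple_top n) (gc_Gamma U n)) euclidean x"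
      using x unfolding Clc_iff by blast
    have "continuous_map (subtopology (gc_tuple_top (Suc n)) (gc_Gamma U (Suc n))) euclidean (\<lambda>z. \<Sum>i\<le>Suc n. sg i (x (gc_face n i z)))"
      by (intro cm_sum cm_sg cm_comp[OF cm_face_sub U(2)]) simp
    then have "continuous_map (subtopology (gc_tuple_top (Suc n)) (gc_Gamma U (Suc n))) euclidean (gc_d n x)"
      by (rule continuous_map_eq) (use gamma_sub in \<open>auto simp: gc_d_sg\<close>)
    then show ?thesis using x U(1) equiv_d unfolding Clc_iff by (auto simp: gc_d_def)
  qed
  show "gc_d n (x + y) = gc_d n x + gc_d n y" for x y by (rule gc_d_add)
  show "gc_d (Suc n) (gc_d n x) = 0" for x by (rule gc_dd)
qed

lemma aug_AlcG: assumes h: "h \<in> Cc act p" shows "aug p h \<in> Alc_G act p 0"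
proof -
  have c: "continuous_map (gc_tuple_top p) euclidean h" using h by (simp add: Cc_def)
  have "AC p 0 UNIV (aug p h)" unfolding AC_def
    by (rule continuous_map_eq[OF cm_comp[OF cm_ST_fst c]]) (auto simp: aug_def)
  then have "aug p h \<in> Alc act p 0" unfolding Alc_iff using nbhd_UNIV by (auto simp: aug_def)
  moreover have "ginv act p 0 (aug p h)" using h by (simp add: ginv_def[OF tm] aug_def Cc_def gc_equivariant_def)
  ultimately show ?thesis by (simp add: AlcG_iff[OF tm])
qed

lemma aug2_AlcG: assumes f: "f \<in> Clc act p" shows "aug2 p f \<in> Alc_G act 0 p"
proof -
  obtain U where U: "gc_identity_nbhd U" "continuous_map (subtopology (gc_tuple_top p) (gc_Gamma U p)) euclidean f"
    using f unfolding Clc_iff by blast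
  have m: "continuous_map (ST 0 U p) (subtopology (gc_tuple_top p) (gc_Gamma U p)) snd"
    by (rule continuous_map_into_subtopology[OF cm_ST_snd]) auto
  have "AC 0 p U (aug2 p f)" unfolding AC_def
    by (rule continuous_map_eq[OF cm_comp[OF m U(2)]]) (use gamma_sub in \<open>auto simp: aug2_def\<close>)
  then have "aug2 p f \<in> Alc act 0 p" unfolding Alc_iff using U(1) by (auto simp: aug2_def)
  moreover have "ginv act 0 p (aug2 p f)" using f by (simp add: ginv_def[OF tm] aug2_def Clc_def gc_equivariant_def)
  ultimately show ?thesis by (simp add: AlcG_iff[OF tm])
qed

end

lemma aug_add: "aug p (f + g) = aug p f + aug p g"
  by (rule ext)+ (simp add: aug_def)

lemma aug2_add: "aug2 p (f + g) = aug2 p f + aug2 p g"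
  by (rule ext)+ (simp add: aug2_def)

lemma aug_inj: assumes "\<forall>x. x \<notin> gc_tuples p \<longrightarrow> h x = 0" "aug p h = 0" shows "h = 0"
proof (rule ext)
  fix x
  have e: "aug p h x pt0 = 0" using fun_cong[OF fun_cong[OF assms(2), of x], of pt0] by simp
  show "h x = 0 x"
  proof (cases "x \<in> gc_tuples p")
    case True then show ?thesis using e by (simp add: aug_def)
  qed (use assms in simp)
qed

lemma aug2_inj: assumes "\<forall>x. x \<notin> gc_tuples p \<longrightarrow> h x = 0" "aug2 p h = 0" shows "h = 0"
proof (rule ext)
  fix x
  have e: "aug2 p h pt0 x = 0" using fun_cong[OF fun_cong[OF assms(2), of pt0], of x] by simp
  show "h x = 0 x"
  proof (cases "x \<in> gc_tuples p")
    case True then show ?thesis using e by (simp add: aug2_def)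
  qed (use assms in simp)
qed

lemma face0_0: "gc_face 0 0 y = restrict (\<lambda>_. y 1) {..0}" by (rule ext) (simp add: gc_face_def)
lemma face0_1: "gc_face 0 (Suc 0) y = restrict (\<lambda>_. y 0) {..0}" by (rule ext) (simp add: gc_face_def)

lemma aug_dv: "d_v p 0 (aug p h) = 0"
  by (rule ext)+ (simp add: d_v_sg aug_def sum.atMost_Suc sg_def)

lemma aug_dh: "d_h p 0 (aug p h) = aug (Suc p) (gc_d p h)"
  by (rule ext)+ (simp add: d_h_sg aug_def gc_d_sg)

lemma aug2_dh: "d_h 0 p (aug2 p h) = 0"
  by (rule ext)+ (simp add: d_h_sg aug2_def sum.atMost_Suc sg_def)

lemma aug2_dv: "d_v 0 p (aug2 p h) = aug2 (Suc p) (gc_d p h)"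
  by (rule ext)+ (simp add: d_v_sg aug2_def gc_d_sg sg_def)


definition gcons :: "nat \<Rightarrow> 'g \<Rightarrow> (nat \<Rightarrow> 'g) \<Rightarrow> nat \<Rightarrow> 'g" where
  "gcons n c x = restrict (\<lambda>k. if k = 0 then c else x (k - 1)) {..Suc n}"

lemma gcons_tuples[simp]: "gcons n c x \<in> gc_tuples (Suc n)" by (simp add: gcons_def gc_tuples_def)

lemma face_gcons0: "x \<in> gc_tuples (Suc n) \<Longrightarrow> gc_face (Suc n) 0 (gcons (Suc n) c x) = x"
  by (rule ext) (auto simp: gc_face_def gcons_def tuples_iff)

lemma face_gconsS: "gc_face (Suc n) (Suc i) (gcons (Suc n) c x) = gcons n c (gc_face n i x)"
  by (rule ext) (auto simp: gc_face_def gcons_def)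

lemma gcons_ltrans: "gcons n (g + c) (gc_ltrans g n x) = gc_ltrans g (Suc n) (gcons n c x)"
  by (rule ext) (auto simp: gcons_def gc_ltrans_def)

lemma cm_ltrans_var:
  fixes u :: "'x \<Rightarrow> 'g::topological_group_add"
  assumes "continuous_map X euclidean u" "continuous_map X (gc_tuple_top n) v"
  shows "continuous_map X (gc_tuple_top n) (\<lambda>z. gc_ltrans (u z) n (v z))"
proof (rule cm_into_tt)
  fix k assume k: "k \<le> n"
  have "continuous_map X euclidean (\<lambda>z. u z + v z k)"
    by (rule cm_add[OF assms(1) cm_comp[OF assms(2) cm_proj[OF k]]])
  then show "continuous_map X euclidean (\<lambda>z. gc_ltrans (u z) n (v z) k)"
    using k by (simp add: gc_ltrans_def)
qed simp

lemma tuple_eq0: "c \<in> gc_tuples 0 \<Longrightarrow> restrict (\<lambda>_. c 0) {..0} = c"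
  by (rule ext) (auto simp: tuples_iff)

lemma z2: "(\<lambda>_ _. 0) = (0 :: 'x \<Rightarrow> 'y \<Rightarrow> 'z::zero)" by (simp add: zero_fun_def)

lemma ce_0: assumes c: "column_exact act p" and f: "f \<in> Alc act p 0" and d: "d_v p 0 f = 0"
  shows "\<exists>h\<in>Ac act p. aug p h = f"
proof -
  have D: "\<forall>f\<in>Alc act p 0. d_v p 0 f = (\<lambda>_ _. 0) \<longleftrightarrow> (\<exists>h\<in>Ac act p. aug p h = f)"
    using c unfolding column_exact_def by (rule conjunct1[OF conjunct2[OF conjunct2[OF conjunct2]]])
  show ?thesis using D[rule_format, OF f] d by (simp add: z2)
qed

lemma ce_S: assumes c: "column_exact act p" and f: "f \<in> Alc act p (Suc q)" and d: "d_v p (Suc q) f = 0"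
  shows "\<exists>h\<in>Alc act p q. d_v p q h = f"
proof -
  have D: "\<forall>q. \<forall>f\<in>Alc act p (Suc q). d_v p (Suc q) f = (\<lambda>_ _. 0) \<longleftrightarrow> (\<exists>h\<in>Alc act p q. d_v p q h = f)"
    using c unfolding column_exact_def by (rule conjunct2[OF conjunct2[OF conjunct2[OF conjunct2]]])
  show ?thesis using D[rule_format, OF f] d by (simp add: z2)
qed

context
  fixes act :: "'g::topological_group_add \<Rightarrow> 'a::topological_ab_group_add \<Rightarrow> 'a"
  assumes tm: "topological_G_module act"
begin

lemma ex0_1:
  assumes ce: "column_exact act p" and F: "F \<in> Alc_G act p 0" and dF: "d_v p 0 F = 0"
  shows "\<exists>h\<in>Cc act p. F = aug p h"
proof -
  have FAi: "F \<in> Alc act p 0 \<and> ginv act p 0 F" using AlcG_iff[OF tm, THEN iffD1, OF F] .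
  have FA: "F \<in> Alc act p 0" using FAi by (rule conjunct1)
  have Fi: "ginv act p 0 F" using FAi by (rule conjunct2)
  obtain h where h: "h \<in> Ac act p" "aug p h = F" using ce_0[OF ce FA dF] by blast
  have "gc_equivariant act p h"
    unfolding gc_equivariant_def
  proof (intro allI ballI)
    fix g :: 'g and x :: "nat \<Rightarrow> 'g" assume x: "x \<in> gc_tuples p"
    have "act g (F (gc_ltrans (- g) p x) (gc_ltrans (- g) 0 pt0)) = F x pt0"
      using Fi x unfolding ginv_def[OF tm] by simp
    then show "act g (h (gc_ltrans (- g) p x)) = h x" using x h(2)[symmetric] by (simp add: aug_def)
  qed
  then have "h \<in> Cc act p" using h(1) by (simp add: Cc_def Ac_def)
  then show ?thesis using h(2) by blast
qed

lemma exS_1: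
  assumes ce: "column_exact act p" and F: "F \<in> Alc_G act p (Suc q)" and dF: "d_v p (Suc q) F = 0"
  shows "\<exists>H\<in>Alc_G act p q. F = d_v p q H"
proof -
  have FAi: "F \<in> Alc act p (Suc q) \<and> ginv act p (Suc q) F" using AlcG_iff[OF tm, THEN iffD1, OF F] .
  have FA: "F \<in> Alc act p (Suc q)" using FAi by (rule conjunct1)
  have Fi: "ginv act p (Suc q) F" using FAi by (rule conjunct2)
  obtain H0 where H0: "H0 \<in> Alc act p q" "d_v p q H0 = F" using ce_S[OF ce FA dF] by blast
  obtain U where U: "gc_identity_nbhd U" "AC p q U H0" using H0(1) unfolding Alc_iff by blast
  define H where "H = (\<lambda>x y. if x \<in> gc_tuples p \<and> y \<in> gc_tuples q then
     act (x 0) (H0 (gc_ltrans (- x 0) p x) (gc_ltrans (- x 0) q y)) else 0)"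
  have u: "continuous_map (ST p U q) euclidean (\<lambda>z. - fst z 0)"
    by (rule cm_neg, rule cm_comp[OF cm_ST_fst cm_proj]) simp
  have m: "continuous_map (ST p U q) (ST p U q) (\<lambda>z. (gc_ltrans (- fst z 0) p (fst z), gc_ltrans (- fst z 0) q (snd z)))"
    by (rule cm_into_ST) (auto intro: cm_ltrans_var[OF u cm_ST_fst] cm_ltrans_var[OF u cm_ST_snd] gamma_ltrans)
  have c1: "continuous_map (ST p U q) euclidean (\<lambda>z. H0 (gc_ltrans (- fst z 0) p (fst z)) (gc_ltrans (- fst z 0) q (snd z)))"
    using cm_comp[OF m U(2)[unfolded AC_def]] by simp
  have c0: "continuous_map (ST p U q) euclidean (\<lambda>z. fst z 0)"
    by (rule cm_comp[OF cm_ST_fst cm_proj]) simp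
  have "AC p q U H" unfolding AC_def
    by (rule continuous_map_eq[OF cm_act[OF tm c0 c1]]) (use gamma_sub in \<open>auto simp: H_def\<close>)
  then have HA: "H \<in> Alc act p q" unfolding Alc_iff using U(1) by (auto simp: H_def)
  have Hi: "ginv act p q H"
    unfolding ginv_def[OF tm]
  proof (intro allI ballI)
    fix g :: 'g and x y :: "nat \<Rightarrow> 'g" assume x: "x \<in> gc_tuples p" and y: "y \<in> gc_tuples q"
    have x0: "gc_ltrans (- g) p x 0 = - g + x 0" by (simp add: gc_ltrans_def)
    have e: "- (- g + x 0) - g = - x 0" by (simp add: minus_add)
    have "act g (H (gc_ltrans (- g) p x) (gc_ltrans (- g) q y)) =
       act g (act (- g + x 0) (H0 (gc_ltrans (- x 0) p x) (gc_ltrans (- x 0) q y)))"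
      by (simp add: H_def x0 ltrans_ltrans e)
    also have "\<dots> = act (g + (- g + x 0)) (H0 (gc_ltrans (- x 0) p x) (gc_ltrans (- x 0) q y))"
      by (rule act_comp[OF tm, symmetric])
    also have "\<dots> = H x y" using x y by (simp add: H_def)
    finally show "act g (H (gc_ltrans (- g) p x) (gc_ltrans (- g) q y)) = H x y" .
  qed
  have "d_v p q H = F"
  proof (rule ext)+
    fix x y
    show "d_v p q H x y = F x y"
    proof (cases "x \<in> gc_tuples p \<and> y \<in> gc_tuples (Suc q)")
      case True
      then have x: "x \<in> gc_tuples p" and y: "y \<in> gc_tuples (Suc q)" by auto
      have "d_v p q H x y = act (x 0) (sg p (\<Sum>i\<le>Suc q. sg i (H0 (gc_ltrans (- x 0) p x) (gc_ltrans (- x 0) q (gc_face q i y)))))"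
        using x y by (simp add: d_v_sg H_def act_sg[OF tm] act_sum[OF tm])
      also have "\<dots> = act (x 0) (d_v p q H0 (gc_ltrans (- x 0) p x) (gc_ltrans (- x 0) (Suc q) y))"
        by (simp add: d_v_sg face_ltrans)
      also have "\<dots> = F x y" using H0(2) Fi x y unfolding ginv_def[OF tm] by simp
      finally show ?thesis .
    next
      case False
      then show ?thesis using FA unfolding Alc_iff by (auto simp: d_v_sg)
    qed
  qed
  then show ?thesis using HA Hi by (auto simp: AlcG_iff[OF tm])
qed

lemma indep0:
  assumes F: "F \<in> Alc_G act 0 p" and dF: "d_h 0 p F = 0" and c: "c1 \<in> gc_tuples 0" "c2 \<in> gc_tuples 0"
  shows "F c1 y = F c2 y"
proof (cases "y \<in> gc_tuples p")
  case True
  define x where "x = restrict (\<lambda>k. if k = 0 then c2 0 else c1 0) {..Suc 0}"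
  have x: "x \<in> gc_tuples (Suc 0)" by (simp add: x_def gc_tuples_def)
  have f0: "gc_face 0 0 x = c1" using c(1) by (auto simp: gc_face_def x_def tuples_iff intro!: ext)
  have f1: "gc_face 0 (Suc 0) x = c2" using c(2) by (auto simp: gc_face_def x_def tuples_iff intro!: ext)
  have "d_h 0 p F x y = F c1 y - F c2 y"
    using x True by (simp add: d_h_sg sum.atMost_Suc f0 f1 sg_def)
  then show ?thesis using dF by (simp add: fun_eq_iff)
next
  case False
  then show ?thesis using F c unfolding AlcG_iff[OF tm] Alc_iff by auto
qed

lemma ex0_2:
  assumes F: "F \<in> Alc_G act 0 p" and dF: "d_h 0 p F = 0"
  shows "\<exists>f\<in>Clc act p. F = aug2 p f"
proof -
  have FAi: "F \<in> Alc act 0 p \<and> ginv act 0 p F" using AlcG_iff[OF tm, THEN iffD1, OF F] .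
  have FA: "F \<in> Alc act 0 p" using FAi by (rule conjunct1)
  have Fi: "ginv act 0 p F" using FAi by (rule conjunct2)
  obtain U where U: "gc_identity_nbhd U" "AC 0 p U F" using FA unfolding Alc_iff by blast
  define f where "f = (\<lambda>y. if y \<in> gc_tuples p then F pt0 y else 0)"
  have Faug: "F = aug2 p f"
  proof (rule ext)+
    fix x y show "F x y = aug2 p f x y"
      using indep0[OF F dF, of x pt0 y] FA unfolding Alc_iff by (auto simp: aug2_def f_def)
  qed
  have m: "continuous_map (subtopology (gc_tuple_top p) (gc_Gamma U p)) (ST 0 U p) (\<lambda>y. (pt0, y))"
    by (rule cm_into_ST) (auto intro: continuous_map_from_subtopology)
  have "continuous_map (subtopology (gc_tuple_top p) (gc_Gamma U p)) euclidean f"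
    by (rule continuous_map_eq[OF cm_comp[OF m U(2)[unfolded AC_def]]]) (use gamma_sub in \<open>auto simp: f_def\<close>)
  moreover have "gc_equivariant act p f"
    unfolding gc_equivariant_def
  proof (intro allI ballI)
    fix g :: 'g and x :: "nat \<Rightarrow> 'g" assume x: "x \<in> gc_tuples p"
    have "act g (f (gc_ltrans (- g) p x)) = act g (F (gc_ltrans (- g) 0 (gc_ltrans g 0 pt0)) (gc_ltrans (- g) p x))"
      using indep0[OF F dF, of pt0 "gc_ltrans (- g) 0 (gc_ltrans g 0 pt0)"] by (simp add: f_def)
    also have "\<dots> = F (gc_ltrans g 0 pt0) x" using Fi x unfolding ginv_def[OF tm] by simp
    also have "\<dots> = f x" using indep0[OF F dF, of "gc_ltrans g 0 pt0" pt0] x by (simp add: f_def)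
    finally show "act g (f (gc_ltrans (- g) p x)) = f x" .
  qed
  ultimately have "f \<in> Clc act p" using U(1) unfolding Clc_iff[OF tm] by (auto simp: f_def)
  then show ?thesis using Faug by blast
qed

lemma exS_2:
  assumes F: "F \<in> Alc_G act (Suc p) q" and dF: "d_h (Suc p) q F = 0"
  shows "\<exists>H\<in>Alc_G act p q. F = d_h p q H"
proof -
  have FAi: "F \<in> Alc act (Suc p) q \<and> ginv act (Suc p) q F" using AlcG_iff[OF tm, THEN iffD1, OF F] .
  have FA: "F \<in> Alc act (Suc p) q" using FAi by (rule conjunct1)
  have Fi: "ginv act (Suc p) q F" using FAi by (rule conjunct2)
  obtain U where U: "gc_identity_nbhd U" "AC (Suc p) q U F" using FA unfolding Alc_iff by blast
  define H where "H = (\<lambda>x y. if x \<in> gc_tuples p \<and> y \<in> gc_tuples q then F (gcons p (y 0) x) y else 0)"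
  have mc: "continuous_map (ST p U q) (gc_tuple_top (Suc p)) (\<lambda>z. gcons p (snd z 0) (fst z))"
  proof (rule cm_into_tt)
    fix k assume k: "k \<le> Suc p"
    show "continuous_map (ST p U q) euclidean (\<lambda>z. gcons p (snd z 0) (fst z) k)"
    proof (cases k)
      case 0 then show ?thesis using cm_comp[OF cm_ST_snd cm_proj[of 0 q]] by (simp add: gcons_def)
    next
      case (Suc k') then show ?thesis using cm_comp[OF cm_ST_fst cm_proj[of k' p]] k by (simp add: gcons_def)
    qed
  qed simp
  have m: "continuous_map (ST p U q) (ST (Suc p) U q) (\<lambda>z. (gcons p (snd z 0) (fst z), snd z))"
    by (rule cm_into_ST) (auto intro: mc cm_ST_snd)
  have "AC p q U H" unfolding AC_def
    by (rule continuous_map_eq[OF cm_comp[OF m U(2)[unfolded AC_def]]]) (use gamma_sub in \<open>auto simp: H_def\<close>)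
  then have HA: "H \<in> Alc act p q" unfolding Alc_iff using U(1) by (auto simp: H_def)
  have Hi: "ginv act p q H"
    unfolding ginv_def[OF tm]
  proof (intro allI ballI)
    fix g :: 'g and x y :: "nat \<Rightarrow> 'g" assume x: "x \<in> gc_tuples p" and y: "y \<in> gc_tuples q"
    have y0: "gc_ltrans (- g) q y 0 = - g + y 0" by (simp add: gc_ltrans_def)
    show "act g (H (gc_ltrans (- g) p x) (gc_ltrans (- g) q y)) = H x y"
      using Fi x y unfolding ginv_def[OF tm] by (simp add: H_def y0 gcons_ltrans)
  qed
  have "d_h p q H = F"
  proof (rule ext)+
    fix x y
    show "d_h p q H x y = F x y"
    proof (cases "x \<in> gc_tuples (Suc p) \<and> y \<in> gc_tuples q")
      case True
      then have x: "x \<in> gc_tuples (Suc p)" and y: "y \<in> gc_tuples q" by auto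
      have "d_h (Suc p) q F (gcons (Suc p) (y 0) x) y = 0" using dF by simp
      then have "(\<Sum>i\<le>Suc (Suc p). sg i (F (gc_face (Suc p) i (gcons (Suc p) (y 0) x)) y)) = 0"
        using y by (simp add: d_h_sg)
      moreover have "(\<Sum>i\<le>Suc (Suc p). sg i (F (gc_face (Suc p) i (gcons (Suc p) (y 0) x)) y)) =
          sg 0 (F (gc_face (Suc p) 0 (gcons (Suc p) (y 0) x)) y) +
          (\<Sum>i\<le>Suc p. sg (Suc i) (F (gc_face (Suc p) (Suc i) (gcons (Suc p) (y 0) x)) y))"
        by (rule sum.atMost_Suc_shift)
      ultimately have "F x y + (\<Sum>i\<le>Suc p. sg (Suc i) (F (gcons p (y 0) (gc_face p i x)) y)) = 0"
        by (simp only: face_gcons0[OF x] face_gconsS) (simp add: sg_def)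
      moreover have "d_h p q H x y = (\<Sum>i\<le>Suc p. sg i (F (gcons p (y 0) (gc_face p i x)) y))"
        using x y by (simp add: d_h_sg H_def)
      ultimately show ?thesis by (simp add: sg_Suc sum_negf eq_neg_iff_add_eq_0)
    next
      case False
      then show ?thesis using FA unfolding Alc_iff by (auto simp: d_h_sg)
    qed
  qed
  then show ?thesis using HA Hi by (auto simp: AlcG_iff[OF tm])
qed

end

lemma fun_add_eq: "fun_add = (+)" by (rule ext)+ (simp add: fun_add_def)
lemma tot_add_eq: "tot_add = (+)" by (rule ext)+ (simp add: tot_add_def)
lemma z1: "(\<lambda>_. 0) = (0 :: 'x \<Rightarrow> 'z::zero)" by (simp add: zero_fun_def)
lemma z3: "(\<lambda>_ _ _. 0) = (0 :: 'w \<Rightarrow> 'x \<Rightarrow> 'y \<Rightarrow> 'z::zero)" by (simp add: zero_fun_def)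
lemma Tot_eq: "Tot act = TT (Alc_G act)"
  by (rule ext) (simp add: Tot_def TT_def z2)
lemma d_tot_eq: "d_tot = DD d_v d_h"
  by (rule ext)+ (simp add: d_tot_def DD_def)
lemma j_v_eq: "j_v = jj aug"
  by (rule ext)+ (simp add: j_v_def jj_def z2)

lemma Hc_eq: "Hc act n = cohomology (Cc act) gc_d (+) 0 n" by (simp add: Hc_def fun_add_eq z1)
lemma Hlc_eq: "Hlc act n = cohomology (Clc act) gc_d (+) 0 n" by (simp add: Hlc_def fun_add_eq z1)
lemma HTot_eq: "HTot act n = cohomology (TT (Alc_G act)) (DD d_v d_h) (+) 0 n"
  by (simp add: HTot_def Tot_eq d_tot_eq tot_add_eq z3)

lemma ex_iso: "\<exists>\<psi>. \<psi> \<in> iso G H \<and> P \<psi> \<Longrightarrow> G \<cong> H" by (auto simp: is_iso_def)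

theorem mainTheorem3:
  fixes act :: "'g::topological_group_add \<Rightarrow> 'a::topological_ab_group_add \<Rightarrow> 'a"
  assumes "topological_G_module act"
    and "\<forall>p. column_exact act p"
  shows "(\<forall>n. \<exists>\<phi>. \<phi> \<in> iso (Hc act n) (HTot act n) \<and>
            (\<forall>f \<in> carrier (cocycle_grp (Cc act) gc_d fun_add (\<lambda>_. 0) n).
               \<phi> (cohom_class (Cc act) gc_d fun_add (\<lambda>_. 0) n f) =
               cohom_class (Tot act) d_tot tot_add (\<lambda>_ _ _. 0) n (j_v n f)))
       \<and> (\<forall>p. Hlc act p \<cong> HTot act p \<and> HTot act p \<cong> Hc act p \<and> Hlc act p \<cong> Hc act p)"
proof -
  note tm = assms(1)
  interpret D: dcx "Alc_G act" d_v d_h by (rule dcx_inst[OF tm])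
  have A1: "aug_dcx (Alc_G act) d_v d_h (Cc act) gc_d aug"
  proof (rule aug_dcx.intro[OF dcx_inst[OF tm]], unfold_locales)
    show "cx (Cc act) gc_d" by (rule cx_Cc[OF tm])
    show "\<And>p x. x \<in> Cc act p \<Longrightarrow> aug p x \<in> Alc_G act p 0" by (rule aug_AlcG[OF tm])
    show "\<And>p x y. x \<in> Cc act p \<Longrightarrow> y \<in> Cc act p \<Longrightarrow> aug p (x + y) = aug p x + aug p y" by (rule aug_add)
    show "\<And>p x. x \<in> Cc act p \<Longrightarrow> aug p x = 0 \<Longrightarrow> x = 0" by (rule aug_inj) (auto simp: Cc_def)
    show "\<And>p x. x \<in> Cc act p \<Longrightarrow> d_v p 0 (aug p x) = 0" by (rule aug_dv)
    show "\<And>p x. x \<in> Cc act p \<Longrightarrow> d_h p 0 (aug p x) = aug (Suc p) (gc_d p x)" by (rule aug_dh)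
    show "\<And>p F. F \<in> Alc_G act p 0 \<Longrightarrow> d_v p 0 F = 0 \<Longrightarrow> \<exists>x\<in>Cc act p. F = aug p x"
      using ex0_1[OF tm] assms(2) by blast
    show "\<And>p q F. F \<in> Alc_G act p (Suc q) \<Longrightarrow> d_v p (Suc q) F = 0 \<Longrightarrow> \<exists>h\<in>Alc_G act p q. F = d_v p q h"
      using exS_1[OF tm] assms(2) by blast
  qed
  have A2: "aug_dcx (\<lambda>p q. Alc_G act q p) (\<lambda>p q. d_h q p) (\<lambda>p q. d_v q p) (Clc act) gc_d aug2"
  proof (rule aug_dcx.intro[OF D.dcx_t], unfold_locales)
    show "cx (Clc act) gc_d" by (rule cx_Clc[OF tm])
    show "\<And>p x. x \<in> Clc act p \<Longrightarrow> aug2 p x \<in> Alc_G act 0 p" by (rule aug2_AlcG[OF tm])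
    show "\<And>p x y. x \<in> Clc act p \<Longrightarrow> y \<in> Clc act p \<Longrightarrow> aug2 p (x + y) = aug2 p x + aug2 p y" by (rule aug2_add)
    show "\<And>p x. x \<in> Clc act p \<Longrightarrow> aug2 p x = 0 \<Longrightarrow> x = 0" by (rule aug2_inj) (auto simp: Clc_def)
    show "\<And>p x. x \<in> Clc act p \<Longrightarrow> d_h 0 p (aug2 p x) = 0" by (rule aug2_dh)
    show "\<And>p x. x \<in> Clc act p \<Longrightarrow> d_v 0 p (aug2 p x) = aug2 (Suc p) (gc_d p x)" by (rule aug2_dv)
    show "\<And>p F. F \<in> Alc_G act 0 p \<Longrightarrow> d_h 0 p F = 0 \<Longrightarrow> \<exists>x\<in>Clc act p. F = aug2 p x"
      by (rule ex0_2[OF tm])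
    show "\<And>p q F. F \<in> Alc_G act (Suc q) p \<Longrightarrow> d_h (Suc q) p F = 0 \<Longrightarrow> \<exists>h\<in>Alc_G act q p. F = d_h q p h"
      by (rule exS_2[OF tm])
  qed
  interpret A1: aug_dcx "Alc_G act" d_v d_h "Cc act" gc_d aug by (rule A1)
  interpret A2: aug_dcx "\<lambda>p q. Alc_G act q p" "\<lambda>p q. d_h q p" "\<lambda>p q. d_v q p" "Clc act" gc_d aug2 by (rule A2)
  have part1: "\<forall>n. \<exists>\<phi>. \<phi> \<in> iso (Hc act n) (HTot act n) \<and>
            (\<forall>f \<in> carrier (cocycle_grp (Cc act) gc_d fun_add (\<lambda>_. 0) n).
               \<phi> (cohom_class (Cc act) gc_d fun_add (\<lambda>_. 0) n f) =
               cohom_class (Tot act) d_tot tot_add (\<lambda>_ _ _. 0) n (j_v n f))"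
  proof
    fix n
    show "\<exists>\<phi>. \<phi> \<in> iso (Hc act n) (HTot act n) \<and>
            (\<forall>f \<in> carrier (cocycle_grp (Cc act) gc_d fun_add (\<lambda>_. 0) n).
               \<phi> (cohom_class (Cc act) gc_d fun_add (\<lambda>_. 0) n f) =
               cohom_class (Tot act) d_tot tot_add (\<lambda>_ _ _. 0) n (j_v n f))"
      unfolding Hc_eq HTot_eq fun_add_eq tot_add_eq z1 z3 Tot_eq d_tot_eq j_v_eq
      by (rule A1.dc_iso)
  qed
  have part2: "Hlc act p \<cong> HTot act p \<and> HTot act p \<cong> Hc act p \<and> Hlc act p \<cong> Hc act p" for p
  proof -
    have i1: "Hc act p \<cong> HTot act p" using part1 ex_iso by blast
    have i2: "Hlc act p \<cong> cohomology (TT (\<lambda>p q. Alc_G act q p)) (DD (\<lambda>p q. d_h q p) (\<lambda>p q. d_v q p)) (+) 0 p"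
      unfolding Hlc_eq by (rule ex_iso[OF A2.dc_iso])
    have i3: "cohomology (TT (\<lambda>p q. Alc_G act q p)) (DD (\<lambda>p q. d_h q p) (\<lambda>p q. d_v q p)) (+) 0 p \<cong> HTot act p"
      unfolding HTot_eq by (rule ex_iso[OF D.swap_iso])
    have g: "group (Hc act p)" unfolding Hc_eq by (rule cohom_group[OF cx_Cc[OF tm]])
    have a: "Hlc act p \<cong> HTot act p" using iso_trans[OF i2 i3] .
    have b: "HTot act p \<cong> Hc act p" using group.iso_sym[OF g i1] .
    show ?thesis using a b iso_trans[OF a b] by blast
  qed
  show ?thesis using part1 part2 by blast
qed


end
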